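(* Let $l:R\to S$ be a Frobenius extension of two-sided Noetherian rings such that ${}_RS_R$ is centrally projective over $R$, let $\omega$ be a finitely generated left $R$-module, and let $M$ be a left $S$-module with $M\in\mathrm{add}_S(S\otimes_R\omega)$. Then the underlying $R$-module ${}_RM$ lies in $\mathrm{add}_R\omega$.
   Context: A ring extension $S/R$ is a unital ring homomorphism $l:R\to S$; $S$-modules are $R$-modules by restriction. $S/R$ is a Frobenius extension if ${}_RS$ is finitely generated projective and ${}_SS_R\cong\mathrm{Hom}_R({}_RS_S,{}_RR_R)$ as $S$-$R$-bimodules. ${}_RS_R$ is centrally projective over $R$ if it is isomorphic as an $R$-$R$-bimodule to a direct summand of a finite direct sum of copies of ${}_RR_R$. For a module $W$ over a ring $A$, $\mathrm{add}_AW$ is the class of $A$-modules isomorphic to direct summands of finite direct sums of copies of $W$. $S\otimes_R\omega$ is a left $S$-module via $S$. *)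

theory Defs
  imports "HOL-Algebra.Algebra"
begin

text \<open>A left module over a ring A is recorded with the library record type
  module (fields carrier, zero, add, smult; the fields monoid.mult and monoid.one are unused).\<close>

locale lmodule = R?: ring A + M?: abelian_group M
  for A :: "('a, 'c) ring_scheme" (structure) and M :: "('a, 'm, 'x) module_scheme" (structure) +
  assumes lsmult_closed:
      "\<lbrakk> a \<in> carrier A; x \<in> carrier M \<rbrakk> \<Longrightarrow> smult M a x \<in> carrier M"
    and lsmult_l_distr:
      "\<lbrakk> a \<in> carrier A; b \<in> carrier A; x \<in> carrier M \<rbrakk> \<Longrightarrow>
      smult M (ring.add A a b) x = ring.add M (smult M a x) (smult M b x)"
    and lsmult_r_distr:
      "\<lbrakk> a \<in> carrier A; x \<in> carrier M; y \<in> carrier M \<rbrakk> \<Longrightarrow>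
      smult M a (ring.add M x y) = ring.add M (smult M a x) (smult M a y)"
    and lsmult_assoc:
      "\<lbrakk> a \<in> carrier A; b \<in> carrier A; x \<in> carrier M \<rbrakk> \<Longrightarrow>
      smult M (monoid.mult A a b) x = smult M a (smult M b x)"
    and lsmult_one:
      "x \<in> carrier M \<Longrightarrow> smult M (monoid.one A) x = x"

definition lin_map :: "('a,'c) ring_scheme \<Rightarrow> ('a,'m,'x) module_scheme \<Rightarrow> ('a,'n,'y) module_scheme
    \<Rightarrow> ('m \<Rightarrow> 'n) \<Rightarrow> bool" where
  "lin_map A M N f \<longleftrightarrow> f \<in> carrier M \<rightarrow> carrier N
     \<and> (\<forall>x\<in>carrier M. \<forall>y\<in>carrier M. f (ring.add M x y) = ring.add N (f x) (f y))
     \<and> (\<forall>a\<in>carrier A. \<forall>x\<in>carrier M. f (smult M a x) = smult N a (f x))"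

definition lmod_iso :: "('a,'c) ring_scheme \<Rightarrow> ('a,'m,'x) module_scheme \<Rightarrow> ('a,'n,'y) module_scheme
    \<Rightarrow> bool" where
  "lmod_iso A M N \<longleftrightarrow> (\<exists>f. lin_map A M N f \<and> bij_betw f (carrier M) (carrier N))"

definition submod :: "('a,'c) ring_scheme \<Rightarrow> ('a,'m,'x) module_scheme \<Rightarrow> 'm set \<Rightarrow> bool" where
  "submod A M N \<longleftrightarrow> N \<subseteq> carrier M \<and> ring.zero M \<in> N
     \<and> (\<forall>x\<in>N. \<forall>y\<in>N. ring.add M x y \<in> N)
     \<and> (\<forall>a\<in>carrier A. \<forall>x\<in>N. smult M a x \<in> N)"

definition pow_mod :: "('a,'m,'x) module_scheme \<Rightarrow> nat \<Rightarrow> ('a, nat \<Rightarrow> 'm) module" where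
  "pow_mod W n = \<lparr> carrier = {f. (\<forall>i<n. f i \<in> carrier W) \<and> (\<forall>i\<ge>n. f i = ring.zero W)},
     Group.monoid.mult = (\<lambda>_ _. undefined), Group.monoid.one = undefined,
     Ring.ring.zero = (\<lambda>i. ring.zero W), Ring.ring.add = (\<lambda>f g i. ring.add W (f i) (g i)),
     smult = (\<lambda>a f i. smult W a (f i)) \<rparr>"

text \<open>M lies in add_A W: M is isomorphic to a direct summand of a finite direct sum of
  copies of W.\<close>
definition in_add :: "('a,'c) ring_scheme \<Rightarrow> ('a,'w,'x) module_scheme \<Rightarrow> ('a,'m,'y) module_scheme
    \<Rightarrow> bool" where
  "in_add A W M \<longleftrightarrow> (\<exists>n N N'.
     submod A (pow_mod W n) N \<and> submod A (pow_mod W n) N'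
     \<and> N \<inter> N' = {ring.zero (pow_mod W n)}
     \<and> (\<forall>x\<in>carrier (pow_mod W n). \<exists>y\<in>N. \<exists>z\<in>N'. x = ring.add (pow_mod W n) y z)
     \<and> lmod_iso A M ((pow_mod W n)\<lparr>carrier := N\<rparr>))"

definition fin_gen :: "('a,'c) ring_scheme \<Rightarrow> ('a,'m,'x) module_scheme \<Rightarrow> bool" where
  "fin_gen A M \<longleftrightarrow> (\<exists>Gs. finite Gs \<and> Gs \<subseteq> carrier M \<and>
     (\<forall>x\<in>carrier M. \<exists>c. c \<in> (Gs \<rightarrow> carrier A) \<and> x = finsum M (\<lambda>v. smult M (c v) v) Gs))"

definition reg_mod :: "('a,'c) ring_scheme \<Rightarrow> ('a,'a) module" where
  "reg_mod A = \<lparr> carrier = carrier A, Group.monoid.mult = monoid.mult A, Group.monoid.one = monoid.one A,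
     Ring.ring.zero = ring.zero A, Ring.ring.add = ring.add A, smult = monoid.mult A \<rparr>"

definition fg_projective :: "('a,'c) ring_scheme \<Rightarrow> ('a,'m,'x) module_scheme \<Rightarrow> bool" where
  "fg_projective A M \<longleftrightarrow> in_add A (reg_mod A) M"

record ('a, 'b, 'c) bimod = "('a, 'c) module" +
  rsmult :: "'c \<Rightarrow> 'b \<Rightarrow> 'c"

locale bimodule = lmodule A M + B?: ring B
  for A :: "('a, 'c) ring_scheme" (structure) and B :: "('b, 'd) ring_scheme" (structure)
    and M :: "('a, 'b, 'm, 'x) bimod_scheme" (structure) +
  assumes rsmult_closed:
      "\<lbrakk> b \<in> carrier B; x \<in> carrier M \<rbrakk> \<Longrightarrow> rsmult M x b \<in> carrier M"
    and rsmult_l_distr: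
      "\<lbrakk> b \<in> carrier B; x \<in> carrier M; y \<in> carrier M \<rbrakk> \<Longrightarrow>
      rsmult M (ring.add M x y) b = ring.add M (rsmult M x b) (rsmult M y b)"
    and rsmult_r_distr:
      "\<lbrakk> b \<in> carrier B; c \<in> carrier B; x \<in> carrier M \<rbrakk> \<Longrightarrow>
      rsmult M x (ring.add B b c) = ring.add M (rsmult M x b) (rsmult M x c)"
    and rsmult_assoc:
      "\<lbrakk> b \<in> carrier B; c \<in> carrier B; x \<in> carrier M \<rbrakk> \<Longrightarrow>
      rsmult M x (monoid.mult B b c) = rsmult M (rsmult M x b) c"
    and rsmult_one:
      "x \<in> carrier M \<Longrightarrow> rsmult M x (monoid.one B) = x"
    and bimod_compat:
      "\<lbrakk> a \<in> carrier A; b \<in> carrier B; x \<in> carrier M \<rbrakk> \<Longrightarrow>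
      rsmult M (smult M a x) b = smult M a (rsmult M x b)"

definition bilin_map :: "('a,'c) ring_scheme \<Rightarrow> ('b,'d) ring_scheme
    \<Rightarrow> ('a,'b,'m,'x) bimod_scheme \<Rightarrow> ('a,'b,'n,'y) bimod_scheme \<Rightarrow> ('m \<Rightarrow> 'n) \<Rightarrow> bool" where
  "bilin_map A B M N f \<longleftrightarrow> lin_map A M N f
     \<and> (\<forall>b\<in>carrier B. \<forall>x\<in>carrier M. f (rsmult M x b) = rsmult N (f x) b)"

definition bimod_iso :: "('a,'c) ring_scheme \<Rightarrow> ('b,'d) ring_scheme
    \<Rightarrow> ('a,'b,'m,'x) bimod_scheme \<Rightarrow> ('a,'b,'n,'y) bimod_scheme \<Rightarrow> bool" where
  "bimod_iso A B M N \<longleftrightarrow> (\<exists>f. bilin_map A B M N f \<and> bij_betw f (carrier M) (carrier N))"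

definition subbimod :: "('a,'c) ring_scheme \<Rightarrow> ('b,'d) ring_scheme
    \<Rightarrow> ('a,'b,'m,'x) bimod_scheme \<Rightarrow> 'm set \<Rightarrow> bool" where
  "subbimod A B M N \<longleftrightarrow> submod A M N \<and> (\<forall>b\<in>carrier B. \<forall>x\<in>N. rsmult M x b \<in> N)"

definition pow_bimod :: "('a,'b,'m,'x) bimod_scheme \<Rightarrow> nat \<Rightarrow> ('a, 'b, nat \<Rightarrow> 'm) bimod" where
  "pow_bimod W n = \<lparr> carrier = {f. (\<forall>i<n. f i \<in> carrier W) \<and> (\<forall>i\<ge>n. f i = ring.zero W)},
     Group.monoid.mult = (\<lambda>_ _. undefined), Group.monoid.one = undefined,
     Ring.ring.zero = (\<lambda>i. ring.zero W), Ring.ring.add = (\<lambda>f g i. ring.add W (f i) (g i)),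
     smult = (\<lambda>a f i. smult W a (f i)), rsmult = (\<lambda>f b i. rsmult W (f i) b) \<rparr>"

definition in_add_bi :: "('a,'c) ring_scheme \<Rightarrow> ('b,'d) ring_scheme
    \<Rightarrow> ('a,'b,'w,'x) bimod_scheme \<Rightarrow> ('a,'b,'m,'y) bimod_scheme \<Rightarrow> bool" where
  "in_add_bi A B W M \<longleftrightarrow> (\<exists>n N N'.
     subbimod A B (pow_bimod W n) N \<and> subbimod A B (pow_bimod W n) N'
     \<and> N \<inter> N' = {ring.zero (pow_bimod W n)}
     \<and> (\<forall>x\<in>carrier (pow_bimod W n). \<exists>y\<in>N. \<exists>z\<in>N'. x = ring.add (pow_bimod W n) y z)
     \<and> bimod_iso A B M ((pow_bimod W n)\<lparr>carrier := N\<rparr>))"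

section \<open>Ring extensions l : R \<rightarrow> S\<close>

definition restr :: "('r \<Rightarrow> 's) \<Rightarrow> ('s,'m,'x) module_scheme \<Rightarrow> ('r,'m) module" where
  "restr l M = \<lparr> carrier = carrier M, Group.monoid.mult = monoid.mult M, Group.monoid.one = monoid.one M, Ring.ring.zero = ring.zero M,
     Ring.ring.add = ring.add M, smult = (\<lambda>r x. smult M (l r) x) \<rparr>"

definition RS :: "('r \<Rightarrow> 's) \<Rightarrow> ('s,'c) ring_scheme \<Rightarrow> ('r,'s) module" where
  "RS l S = restr l (reg_mod S)"

definition RSR :: "('r \<Rightarrow> 's) \<Rightarrow> ('s,'c) ring_scheme \<Rightarrow> ('r,'r,'s) bimod" where
  "RSR l S = \<lparr> carrier = carrier S, Group.monoid.mult = monoid.mult S, Group.monoid.one = monoid.one S, Ring.ring.zero = ring.zero S, Ring.ring.add = ring.add S,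
     smult = (\<lambda>r s. monoid.mult S (l r) s), rsmult = (\<lambda>s r. monoid.mult S s (l r)) \<rparr>"

definition SSR :: "('r \<Rightarrow> 's) \<Rightarrow> ('s,'c) ring_scheme \<Rightarrow> ('s,'r,'s) bimod" where
  "SSR l S = \<lparr> carrier = carrier S, Group.monoid.mult = monoid.mult S, Group.monoid.one = monoid.one S, Ring.ring.zero = ring.zero S, Ring.ring.add = ring.add S,
     smult = monoid.mult S, rsmult = (\<lambda>s r. monoid.mult S s (l r)) \<rparr>"

definition RRR :: "('r,'c) ring_scheme \<Rightarrow> ('r,'r,'r) bimod" where
  "RRR R = \<lparr> carrier = carrier R, Group.monoid.mult = monoid.mult R, Group.monoid.one = monoid.one R, Ring.ring.zero = ring.zero R, Ring.ring.add = ring.add R,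
     smult = monoid.mult R, rsmult = monoid.mult R \<rparr>"

definition HomSR :: "('r,'c) ring_scheme \<Rightarrow> ('s,'d) ring_scheme \<Rightarrow> ('r \<Rightarrow> 's)
    \<Rightarrow> ('s,'r,'s \<Rightarrow> 'r) bimod" where
  "HomSR R S l = \<lparr> carrier = {f. lin_map R (RS l S) (reg_mod R) f \<and> f \<in> extensional (carrier S)},
     Group.monoid.mult = (\<lambda>_ _. undefined), Group.monoid.one = undefined,
     Ring.ring.zero = (\<lambda>x\<in>carrier S. ring.zero R),
     Ring.ring.add = (\<lambda>f g. \<lambda>x\<in>carrier S. ring.add R (f x) (g x)),
     smult = (\<lambda>s f. \<lambda>x\<in>carrier S. f (monoid.mult S x s)),
     rsmult = (\<lambda>f r. \<lambda>x\<in>carrier S. monoid.mult R (f x) r) \<rparr>"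

definition frobenius_ext :: "('r,'c) ring_scheme \<Rightarrow> ('s,'d) ring_scheme \<Rightarrow> ('r \<Rightarrow> 's) \<Rightarrow> bool" where
  "frobenius_ext R S l \<longleftrightarrow> fg_projective R (RS l S) \<and> bimod_iso S R (SSR l S) (HomSR R S l)"

definition centrally_projective :: "('r,'c) ring_scheme \<Rightarrow> ('s,'d) ring_scheme \<Rightarrow> ('r \<Rightarrow> 's) \<Rightarrow> bool" where
  "centrally_projective R S l \<longleftrightarrow> in_add_bi R R (RRR R) (RSR l S)"

definition left_ideal :: "('r,'c) ring_scheme \<Rightarrow> 'r set \<Rightarrow> bool" where
  "left_ideal R I \<longleftrightarrow> submod R (reg_mod R) I"

definition right_ideal :: "('r,'c) ring_scheme \<Rightarrow> 'r set \<Rightarrow> bool" where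
  "right_ideal R I \<longleftrightarrow> I \<subseteq> carrier R \<and> ring.zero R \<in> I
     \<and> (\<forall>x\<in>I. \<forall>y\<in>I. ring.add R x y \<in> I) \<and> (\<forall>a\<in>carrier R. \<forall>x\<in>I. monoid.mult R x a \<in> I)"

definition left_noetherian :: "('r,'c) ring_scheme \<Rightarrow> bool" where
  "left_noetherian R \<longleftrightarrow> (\<forall>C :: nat \<Rightarrow> 'r set.
     (\<forall>n. left_ideal R (C n)) \<and> (\<forall>n. C n \<subseteq> C (Suc n)) \<longrightarrow> (\<exists>m. \<forall>n\<ge>m. C n = C m))"

definition right_noetherian :: "('r,'c) ring_scheme \<Rightarrow> bool" where
  "right_noetherian R \<longleftrightarrow> (\<forall>C :: nat \<Rightarrow> 'r set.
     (\<forall>n. right_ideal R (C n)) \<and> (\<forall>n. C n \<subseteq> C (Suc n)) \<longrightarrow> (\<exists>m. \<forall>n\<ge>m. C n = C m))"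

definition noetherian2 :: "('r,'c) ring_scheme \<Rightarrow> bool" where
  "noetherian2 R \<longleftrightarrow> ring R \<and> left_noetherian R \<and> right_noetherian R"

section \<open>The tensor product S \<otimes>_R W as a left S-module\<close>

text \<open>Free abelian group on carrier S \<times> carrier W (finitely supported integer-valued functions),
  modulo the subgroup generated by the balanced-bilinearity relations.\<close>

definition tfree :: "('s,'c) ring_scheme \<Rightarrow> ('r,'w,'x) module_scheme \<Rightarrow> ('s \<times> 'w \<Rightarrow> int) set" where
  "tfree S W = {c. finite {p. c p \<noteq> 0} \<and> {p. c p \<noteq> 0} \<subseteq> carrier S \<times> carrier W}"

definition tdelta :: "'s \<times> 'w \<Rightarrow> ('s \<times> 'w \<Rightarrow> int)" where
  "tdelta p = (\<lambda>q. if q = p then 1 else 0)"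

definition fdiff :: "('p \<Rightarrow> int) \<Rightarrow> ('p \<Rightarrow> int) \<Rightarrow> ('p \<Rightarrow> int)" where
  "fdiff x y = (\<lambda>p. x p - y p)"

definition fadd :: "('p \<Rightarrow> int) \<Rightarrow> ('p \<Rightarrow> int) \<Rightarrow> ('p \<Rightarrow> int)" where
  "fadd x y = (\<lambda>p. x p + y p)"

definition tgens :: "('r,'c) ring_scheme \<Rightarrow> ('s,'d) ring_scheme \<Rightarrow> ('r \<Rightarrow> 's)
    \<Rightarrow> ('r,'w,'x) module_scheme \<Rightarrow> ('s \<times> 'w \<Rightarrow> int) set" where
  "tgens R S l W =
     {fdiff (fdiff (tdelta (ring.add S s s', w)) (tdelta (s, w))) (tdelta (s', w)) | s s' w.
        s \<in> carrier S \<and> s' \<in> carrier S \<and> w \<in> carrier W}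
   \<union> {fdiff (fdiff (tdelta (s, ring.add W w w')) (tdelta (s, w))) (tdelta (s, w')) | s w w'.
        s \<in> carrier S \<and> w \<in> carrier W \<and> w' \<in> carrier W}
   \<union> {fdiff (tdelta (monoid.mult S s (l r), w)) (tdelta (s, smult W r w)) | s r w.
        s \<in> carrier S \<and> r \<in> carrier R \<and> w \<in> carrier W}"

definition trel :: "('r,'c) ring_scheme \<Rightarrow> ('s,'d) ring_scheme \<Rightarrow> ('r \<Rightarrow> 's)
    \<Rightarrow> ('r,'w,'x) module_scheme \<Rightarrow> ('s \<times> 'w \<Rightarrow> int) set" where
  "trel R S l W = \<Inter>{H. tgens R S l W \<subseteq> H \<and> H \<subseteq> tfree S W \<and> (\<lambda>_. 0) \<in> H
      \<and> (\<forall>x\<in>H. \<forall>y\<in>H. fdiff x y \<in> H)}"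

definition tcls :: "('r,'c) ring_scheme \<Rightarrow> ('s,'d) ring_scheme \<Rightarrow> ('r \<Rightarrow> 's)
    \<Rightarrow> ('r,'w,'x) module_scheme \<Rightarrow> ('s \<times> 'w \<Rightarrow> int) \<Rightarrow> ('s \<times> 'w \<Rightarrow> int) set" where
  "tcls R S l W c = {d \<in> tfree S W. fdiff d c \<in> trel R S l W}"

text \<open>Left action of s on generators: s \<cdot> (t, w) = (s t, w), extended additively.\<close>
definition tact :: "('s,'d) ring_scheme \<Rightarrow> 's \<Rightarrow> ('s \<times> 'w \<Rightarrow> int) \<Rightarrow> ('s \<times> 'w \<Rightarrow> int)" where
  "tact S s c = (\<lambda>(t, w). \<Sum>u\<in>{u. c (u, w) \<noteq> 0 \<and> monoid.mult S s u = t}. c (u, w))"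

definition tensor :: "('r,'c) ring_scheme \<Rightarrow> ('s,'d) ring_scheme \<Rightarrow> ('r \<Rightarrow> 's)
    \<Rightarrow> ('r,'w,'x) module_scheme \<Rightarrow> ('s, ('s \<times> 'w \<Rightarrow> int) set) module" where
  "tensor R S l W = \<lparr> carrier = tcls R S l W ` tfree S W,
     Group.monoid.mult = (\<lambda>_ _. undefined), Group.monoid.one = undefined,
     Ring.ring.zero = tcls R S l W (\<lambda>_. 0),
     Ring.ring.add = (\<lambda>A B. \<Union>{tcls R S l W (fadd a b) | a b. a \<in> A \<and> b \<in> B}),
     smult = (\<lambda>s A. \<Union>{tcls R S l W (tact S s a) | a. a \<in> A}) \<rparr>"

end

theory Submission
  imports Defs
begin


context lmodule
begin

lemma smult_zero_left:
  assumes "x \<in> carrier M" shows "smult M \<zero>\<^bsub>A\<^esub> x = \<zero>\<^bsub>M\<^esub>"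
proof -
  have "smult M \<zero>\<^bsub>A\<^esub> x = smult M \<zero>\<^bsub>A\<^esub> x \<oplus>\<^bsub>M\<^esub> smult M \<zero>\<^bsub>A\<^esub> x"
    using lsmult_l_distr[of "\<zero>\<^bsub>A\<^esub>" "\<zero>\<^bsub>A\<^esub>" x] assms by simp
  then have "smult M \<zero>\<^bsub>A\<^esub> x \<oplus>\<^bsub>M\<^esub> \<zero>\<^bsub>M\<^esub> = smult M \<zero>\<^bsub>A\<^esub> x \<oplus>\<^bsub>M\<^esub> smult M \<zero>\<^bsub>A\<^esub> x"
    using lsmult_closed assms by simp
  then show ?thesis using lsmult_closed assms
    by (metis M.add.l_cancel M.zero_closed R.zero_closed)
qed

lemma smult_zero_right:
  assumes "a \<in> carrier A" shows "smult M a \<zero>\<^bsub>M\<^esub> = \<zero>\<^bsub>M\<^esub>"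
proof -
  have "smult M a \<zero>\<^bsub>M\<^esub> = smult M a \<zero>\<^bsub>M\<^esub> \<oplus>\<^bsub>M\<^esub> smult M a \<zero>\<^bsub>M\<^esub>"
    using lsmult_r_distr[of a "\<zero>\<^bsub>M\<^esub>" "\<zero>\<^bsub>M\<^esub>"] assms by simp
  then have "smult M a \<zero>\<^bsub>M\<^esub> \<oplus>\<^bsub>M\<^esub> \<zero>\<^bsub>M\<^esub> = smult M a \<zero>\<^bsub>M\<^esub> \<oplus>\<^bsub>M\<^esub> smult M a \<zero>\<^bsub>M\<^esub>"
    using lsmult_closed assms by simp
  then show ?thesis using lsmult_closed assms
    by (metis M.add.l_cancel M.zero_closed)
qed

lemma neg_smult:
  assumes "x \<in> carrier M" shows "\<ominus>\<^bsub>M\<^esub> x = smult M (\<ominus>\<^bsub>A\<^esub> \<one>\<^bsub>A\<^esub>) x"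
proof -
  have "x \<oplus>\<^bsub>M\<^esub> smult M (\<ominus>\<^bsub>A\<^esub> \<one>\<^bsub>A\<^esub>) x = smult M (\<one>\<^bsub>A\<^esub> \<oplus>\<^bsub>A\<^esub> \<ominus>\<^bsub>A\<^esub> \<one>\<^bsub>A\<^esub>) x"
    using lsmult_l_distr lsmult_one assms by simp
  also have "\<dots> = \<zero>\<^bsub>M\<^esub>" using smult_zero_left assms by (simp add: R.r_neg)
  finally show ?thesis using assms lsmult_closed
    by (metis M.add.inv_equality M.a_comm R.a_inv_closed R.one_closed)
qed

end

lemma lmodule_pow_like:
  fixes Q :: "('a, nat \<Rightarrow> 'm, 'z) module_scheme"
  assumes W: "lmodule A W"
    and c: "carrier Q = {f. (\<forall>i<n. f i \<in> carrier W) \<and> (\<forall>i\<ge>n. f i = \<zero>\<^bsub>W\<^esub>)}"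
    and z: "\<zero>\<^bsub>Q\<^esub> = (\<lambda>i. \<zero>\<^bsub>W\<^esub>)"
    and a: "ring.add Q = (\<lambda>f g i. f i \<oplus>\<^bsub>W\<^esub> g i)"
    and s: "smult Q = (\<lambda>r f i. smult W r (f i))"
  shows "lmodule A Q"
proof -
  interpret W: lmodule A W by fact
  have ag: "abelian_group Q"
  proof (rule abelian_groupI)
    show "\<And>x y. x \<in> carrier Q \<Longrightarrow> y \<in> carrier Q \<Longrightarrow> x \<oplus>\<^bsub>Q\<^esub> y \<in> carrier Q"
      by (auto simp: c a)
    show "\<zero>\<^bsub>Q\<^esub> \<in> carrier Q" by (auto simp: c z)
    show "\<And>x y za. x \<in> carrier Q \<Longrightarrow> y \<in> carrier Q \<Longrightarrow> za \<in> carrier Q \<Longrightarrow>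
        x \<oplus>\<^bsub>Q\<^esub> y \<oplus>\<^bsub>Q\<^esub> za = x \<oplus>\<^bsub>Q\<^esub> (y \<oplus>\<^bsub>Q\<^esub> za)"
    proof -
      fix x y za assume "x \<in> carrier Q" "y \<in> carrier Q" "za \<in> carrier Q"
      then show "x \<oplus>\<^bsub>Q\<^esub> y \<oplus>\<^bsub>Q\<^esub> za = x \<oplus>\<^bsub>Q\<^esub> (y \<oplus>\<^bsub>Q\<^esub> za)"
        unfolding a c by (auto intro!: ext) (metis W.a_assoc not_le W.l_zero W.zero_closed)
    qed
    show "\<And>x y. x \<in> carrier Q \<Longrightarrow> y \<in> carrier Q \<Longrightarrow> x \<oplus>\<^bsub>Q\<^esub> y = y \<oplus>\<^bsub>Q\<^esub> x"
      unfolding a c by (auto intro!: ext) (metis W.a_comm not_le)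
    show "\<And>x. x \<in> carrier Q \<Longrightarrow> \<zero>\<^bsub>Q\<^esub> \<oplus>\<^bsub>Q\<^esub> x = x"
      unfolding a c z by (auto intro!: ext) (metis W.l_zero not_le W.zero_closed)
    show "\<And>x. x \<in> carrier Q \<Longrightarrow> \<exists>y\<in>carrier Q. y \<oplus>\<^bsub>Q\<^esub> x = \<zero>\<^bsub>Q\<^esub>"
    proof -
      fix x assume x: "x \<in> carrier Q"
      have 1: "(\<lambda>i. \<ominus>\<^bsub>W\<^esub> x i) \<in> carrier Q"
        using x by (auto simp: c)
      have 2: "(\<lambda>i. \<ominus>\<^bsub>W\<^esub> x i) \<oplus>\<^bsub>Q\<^esub> x = \<zero>\<^bsub>Q\<^esub>"
      proof -
        have "\<ominus>\<^bsub>W\<^esub> x i \<oplus>\<^bsub>W\<^esub> x i = \<zero>\<^bsub>W\<^esub>" for i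
          using x by (cases "i < n") (auto simp: c W.l_neg)
        then show ?thesis by (auto simp: a z)
      qed
      show "\<exists>y\<in>carrier Q. y \<oplus>\<^bsub>Q\<^esub> x = \<zero>\<^bsub>Q\<^esub>" using 1 2 by blast
    qed
  qed
  have cw: "\<And>x i. x \<in> carrier Q \<Longrightarrow> x i \<in> carrier W"
    by (auto simp: c) (metis W.zero_closed not_le)
  show ?thesis
  proof (rule lmodule.intro[OF W.R.ring_axioms ag], rule lmodule_axioms.intro)
    show "\<And>a x. a \<in> carrier A \<Longrightarrow> x \<in> carrier Q \<Longrightarrow> smult Q a x \<in> carrier Q"
      by (auto simp: c s W.lsmult_closed W.smult_zero_right)
    show "\<And>a b x. a \<in> carrier A \<Longrightarrow> b \<in> carrier A \<Longrightarrow> x \<in> carrier Q \<Longrightarrow>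
      smult Q (a \<oplus>\<^bsub>A\<^esub> b) x = smult Q a x \<oplus>\<^bsub>Q\<^esub> smult Q b x"
      by (simp add: s a cw W.lsmult_l_distr)
    show "\<And>a x y. a \<in> carrier A \<Longrightarrow> x \<in> carrier Q \<Longrightarrow> y \<in> carrier Q \<Longrightarrow>
      smult Q a (x \<oplus>\<^bsub>Q\<^esub> y) = smult Q a x \<oplus>\<^bsub>Q\<^esub> smult Q a y"
      by (simp add: s a cw W.lsmult_r_distr)
    show "\<And>a b x. a \<in> carrier A \<Longrightarrow> b \<in> carrier A \<Longrightarrow> x \<in> carrier Q \<Longrightarrow>
      smult Q (a \<otimes>\<^bsub>A\<^esub> b) x = smult Q a (smult Q b x)"
      by (simp add: s cw W.lsmult_assoc)
    show "\<And>x. x \<in> carrier Q \<Longrightarrow> smult Q \<one>\<^bsub>A\<^esub> x = x"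
      by (simp add: s cw W.lsmult_one)
  qed
qed

lemma lmodule_pow_mod: "lmodule A W \<Longrightarrow> lmodule A (pow_mod W n)"
  by (rule lmodule_pow_like) (auto simp: pow_mod_def)


lemma (in abelian_group) ag_swap: "a \<in> carrier G \<Longrightarrow> a' \<in> carrier G \<Longrightarrow> b \<in> carrier G \<Longrightarrow> b' \<in> carrier G \<Longrightarrow>
  a \<oplus> b = a' \<oplus> b' \<Longrightarrow> a \<ominus> a' = b' \<ominus> b"
proof -
  assume c: "a \<in> carrier G" "a' \<in> carrier G" "b \<in> carrier G" "b' \<in> carrier G" and e: "a \<oplus> b = a' \<oplus> b'"
  have "(a \<ominus> a') \<oplus> b = (a \<oplus> b) \<ominus> a'" using c by (simp add: minus_eq a_ac)
  also have "\<dots> = b'" using c e by (simp add: minus_eq a_assoc) (metis a_comm a_inv_closed r_neg2)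
  finally have e2: "(a \<ominus> a') \<oplus> b = b'" .
  have "a \<ominus> a' = ((a \<ominus> a') \<oplus> b) \<ominus> b" using c by (simp add: minus_eq a_assoc r_neg)
  then show ?thesis using e2 by simp
qed
lemma (in abelian_group) ag_minus_zero: "a \<in> carrier G \<Longrightarrow> a' \<in> carrier G \<Longrightarrow> a \<ominus> a' = \<zero> \<Longrightarrow> a = a'"
  by (metis a_minus_def add.inv_solve_right l_zero zero_closed)

section \<open>Retractions\<close>

definition retr :: "('a,'c) ring_scheme \<Rightarrow> ('a,'m,'x) module_scheme \<Rightarrow> ('a,'n,'y) module_scheme
    \<Rightarrow> ('m \<Rightarrow> 'n) \<Rightarrow> ('n \<Rightarrow> 'm) \<Rightarrow> bool" where
  "retr A P Q f g \<longleftrightarrow> lin_map A P Q f \<and> lin_map A Q P g \<and> (\<forall>x\<in>carrier P. g (f x) = x)"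

lemma lin_map_closed: "lin_map A P Q f \<Longrightarrow> x \<in> carrier P \<Longrightarrow> f x \<in> carrier Q"
  by (auto simp: lin_map_def)

lemma lin_map_add: "lin_map A P Q f \<Longrightarrow> x \<in> carrier P \<Longrightarrow> y \<in> carrier P \<Longrightarrow>
    f (x \<oplus>\<^bsub>P\<^esub> y) = f x \<oplus>\<^bsub>Q\<^esub> f y"
  by (auto simp: lin_map_def)

lemma lin_map_smult: "lin_map A P Q f \<Longrightarrow> a \<in> carrier A \<Longrightarrow> x \<in> carrier P \<Longrightarrow>
    f (smult P a x) = smult Q a (f x)"
  by (auto simp: lin_map_def)

lemma lin_map_zero:
  assumes "abelian_group P" "abelian_group Q" "lin_map A P Q f"
  shows "f \<zero>\<^bsub>P\<^esub> = \<zero>\<^bsub>Q\<^esub>"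
proof -
  interpret P: abelian_group P by fact
  interpret Q: abelian_group Q by fact
  have "f \<zero>\<^bsub>P\<^esub> = f \<zero>\<^bsub>P\<^esub> \<oplus>\<^bsub>Q\<^esub> f \<zero>\<^bsub>P\<^esub>"
    using lin_map_add[OF assms(3), of "\<zero>\<^bsub>P\<^esub>" "\<zero>\<^bsub>P\<^esub>"] by simp
  then show ?thesis using lin_map_closed[OF assms(3) P.zero_closed]
    by (metis Q.add.l_cancel_one' Q.zero_closed Q.r_zero)
qed

lemma lin_map_minus:
  assumes "abelian_group P" "abelian_group Q" "lin_map A P Q f" "x \<in> carrier P" "y \<in> carrier P"
  shows "f (x \<ominus>\<^bsub>P\<^esub> y) = f x \<ominus>\<^bsub>Q\<^esub> f y"
proof -
  interpret P: abelian_group P by fact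
  interpret Q: abelian_group Q by fact
  have "f (\<ominus>\<^bsub>P\<^esub> y) \<oplus>\<^bsub>Q\<^esub> f y = \<zero>\<^bsub>Q\<^esub>"
    using lin_map_add[OF assms(3), of "\<ominus>\<^bsub>P\<^esub> y" y] assms lin_map_zero[OF assms(1-3)]
    by (simp add: P.l_neg)
  then have "f (\<ominus>\<^bsub>P\<^esub> y) = \<ominus>\<^bsub>Q\<^esub> f y"
    using assms lin_map_closed[OF assms(3)] by (metis P.a_inv_closed Q.add.inv_equality)
  then show ?thesis using assms lin_map_add[OF assms(3), of x "\<ominus>\<^bsub>P\<^esub> y"]
    by (simp add: P.minus_eq Q.minus_eq)
qed

context lmodule
begin

lemma submod_neg: "submod A M N \<Longrightarrow> x \<in> N \<Longrightarrow> \<ominus>\<^bsub>M\<^esub> x \<in> N"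
  using neg_smult[of x] by (auto simp: submod_def)

lemma submod_minus: "submod A M N \<Longrightarrow> x \<in> N \<Longrightarrow> y \<in> N \<Longrightarrow> x \<ominus>\<^bsub>M\<^esub> y \<in> N"
  using submod_neg[of N y] by (auto simp: submod_def M.minus_eq)

lemma decomp_unique:
  assumes N: "submod A M N" and N': "submod A M N'" and int: "N \<inter> N' = {\<zero>\<^bsub>M\<^esub>}"
    and a: "a \<in> N" "a' \<in> N" and b: "b \<in> N'" "b' \<in> N'"
    and eq: "a \<oplus>\<^bsub>M\<^esub> b = a' \<oplus>\<^bsub>M\<^esub> b'"
  shows "a = a'"
proof -
  have c: "a \<in> carrier M" "a' \<in> carrier M" "b \<in> carrier M" "b' \<in> carrier M"
    using N N' a b by (auto simp: submod_def)
  have "a \<ominus>\<^bsub>M\<^esub> a' = b' \<ominus>\<^bsub>M\<^esub> b"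
    using eq c by (rule M.ag_swap[rotated 4])
  moreover have "a \<ominus>\<^bsub>M\<^esub> a' \<in> N" using submod_minus[OF N a] .
  moreover have "b' \<ominus>\<^bsub>M\<^esub> b \<in> N'" using submod_minus[OF N' b(2) b(1)] .
  ultimately have "a \<ominus>\<^bsub>M\<^esub> a' = \<zero>\<^bsub>M\<^esub>" using int by auto
  then show ?thesis using c by (simp add: M.ag_minus_zero)
qed

end


lemma (in lmodule) proj_props:
  assumes N: "submod A M N" and N': "submod A M N'" and int: "N \<inter> N' = {\<zero>\<^bsub>M\<^esub>}"
    and dec: "\<forall>x\<in>carrier M. \<exists>y\<in>N. \<exists>z\<in>N'. x = y \<oplus>\<^bsub>M\<^esub> z"
    and pd: "pr = (\<lambda>x. SOME y. y \<in> N \<and> (\<exists>z\<in>N'. x = y \<oplus>\<^bsub>M\<^esub> z))"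
  shows "\<And>x. x \<in> carrier M \<Longrightarrow> pr x \<in> N"
    and "\<And>a. a \<in> N \<Longrightarrow> pr a = a"
    and "\<And>x y. x \<in> carrier M \<Longrightarrow> y \<in> carrier M \<Longrightarrow> pr (x \<oplus>\<^bsub>M\<^esub> y) = pr x \<oplus>\<^bsub>M\<^esub> pr y"
    and "\<And>r x. r \<in> carrier A \<Longrightarrow> x \<in> carrier M \<Longrightarrow> pr (smult M r x) = smult M r (pr x)"
proof -
  have sN: "N \<subseteq> carrier M" and sN': "N' \<subseteq> carrier M" using N N' by (auto simp: submod_def)
  have spec: "pr x \<in> N \<and> (\<exists>z\<in>N'. x = pr x \<oplus>\<^bsub>M\<^esub> z)" if "x \<in> carrier M" for x
  proof -
    have "\<exists>y. y \<in> N \<and> (\<exists>z\<in>N'. x = y \<oplus>\<^bsub>M\<^esub> z)" using dec that by blast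
    then show ?thesis unfolding pd by (rule someI_ex)
  qed
  have uniq: "pr x = y" if "x \<in> carrier M" "y \<in> N" "z \<in> N'" "x = y \<oplus>\<^bsub>M\<^esub> z" for x y z
  proof -
    note th = that
    obtain z0 where "z0 \<in> N'" "x = pr x \<oplus>\<^bsub>M\<^esub> z0" "pr x \<in> N" using spec[OF th(1)] by blast
    then show ?thesis using decomp_unique[OF N N' int, of "pr x" y z0 z] th by simp
  qed
  show 1: "\<And>x. x \<in> carrier M \<Longrightarrow> pr x \<in> N" using spec by blast
  show "\<And>a. a \<in> N \<Longrightarrow> pr a = a"
  proof -
    fix a assume a: "a \<in> N"
    have "\<zero>\<^bsub>M\<^esub> \<in> N'" using N' by (simp add: submod_def)
    moreover have "a \<in> carrier M" using a sN by auto
    ultimately show "pr a = a" using uniq[of a a "\<zero>\<^bsub>M\<^esub>"] a by simp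
  qed
  show "\<And>x y. x \<in> carrier M \<Longrightarrow> y \<in> carrier M \<Longrightarrow> pr (x \<oplus>\<^bsub>M\<^esub> y) = pr x \<oplus>\<^bsub>M\<^esub> pr y"
  proof -
    fix x y assume x: "x \<in> carrier M" and y: "y \<in> carrier M"
    obtain z where z: "z \<in> N'" "x = pr x \<oplus>\<^bsub>M\<^esub> z" using spec[OF x] by blast
    obtain z' where z': "z' \<in> N'" "y = pr y \<oplus>\<^bsub>M\<^esub> z'" using spec[OF y] by blast
    have px: "pr x \<in> carrier M" "pr y \<in> carrier M" using 1 x y sN by auto
    have zc: "z \<in> carrier M" "z' \<in> carrier M" using z z' sN' by auto
    have "x \<oplus>\<^bsub>M\<^esub> y = (pr x \<oplus>\<^bsub>M\<^esub> z) \<oplus>\<^bsub>M\<^esub> (pr y \<oplus>\<^bsub>M\<^esub> z')"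
      using z(2) z'(2) by (rule arg_cong2)
    also have "\<dots> = (pr x \<oplus>\<^bsub>M\<^esub> pr y) \<oplus>\<^bsub>M\<^esub> (z \<oplus>\<^bsub>M\<^esub> z')"
      using px zc by (simp add: M.a_ac)
    finally have "x \<oplus>\<^bsub>M\<^esub> y = (pr x \<oplus>\<^bsub>M\<^esub> pr y) \<oplus>\<^bsub>M\<^esub> (z \<oplus>\<^bsub>M\<^esub> z')" .
    moreover have "pr x \<oplus>\<^bsub>M\<^esub> pr y \<in> N" using 1 x y N by (auto simp: submod_def)
    moreover have "z \<oplus>\<^bsub>M\<^esub> z' \<in> N'" using z z' N' by (auto simp: submod_def)
    ultimately show "pr (x \<oplus>\<^bsub>M\<^esub> y) = pr x \<oplus>\<^bsub>M\<^esub> pr y" using uniq x y by blast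
  qed
  show "\<And>r x. r \<in> carrier A \<Longrightarrow> x \<in> carrier M \<Longrightarrow> pr (smult M r x) = smult M r (pr x)"
  proof -
    fix r x assume r: "r \<in> carrier A" and x: "x \<in> carrier M"
    obtain z where z: "z \<in> N'" "x = pr x \<oplus>\<^bsub>M\<^esub> z" using spec[OF x] by blast
    have px: "pr x \<in> carrier M" using 1 x sN by auto
    have zc: "z \<in> carrier M" using z sN' by auto
    have "smult M r x = smult M r (pr x \<oplus>\<^bsub>M\<^esub> z)"
      using z(2) by (rule arg_cong)
    also have "\<dots> = smult M r (pr x) \<oplus>\<^bsub>M\<^esub> smult M r z"
      by (rule lsmult_r_distr[OF r px zc])
    finally have "smult M r x = smult M r (pr x) \<oplus>\<^bsub>M\<^esub> smult M r z" .
    moreover have "smult M r (pr x) \<in> N" using 1 x r N by (auto simp: submod_def)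
    moreover have "smult M r z \<in> N'" using z r N' by (auto simp: submod_def)
    ultimately show "pr (smult M r x) = smult M r (pr x)" using uniq x r lsmult_closed by blast
  qed
qed

lemma in_add_retr:
  assumes W: "lmodule A W" and P: "lmodule A P" and ia: "in_add A W P"
  shows "\<exists>n f g. retr A P (pow_mod W n) f g"
proof -
  obtain n N N' h where N: "submod A (pow_mod W n) N" and N': "submod A (pow_mod W n) N'"
    and int: "N \<inter> N' = {\<zero>\<^bsub>pow_mod W n\<^esub>}"
    and dec: "\<forall>x\<in>carrier (pow_mod W n). \<exists>y\<in>N. \<exists>z\<in>N'. x = y \<oplus>\<^bsub>pow_mod W n\<^esub> z"
    and hl: "lin_map A P ((pow_mod W n)\<lparr>carrier := N\<rparr>) h" and hb: "bij_betw h (carrier P) N"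
    using ia unfolding in_add_def lmod_iso_def by (elim exE conjE) (rule that; simp)
  interpret Y: lmodule A "pow_mod W n" using lmodule_pow_mod[OF W] .
  interpret P: lmodule A P by fact
  define pr where "pr = (\<lambda>x. SOME y. y \<in> N \<and> (\<exists>z\<in>N'. x = y \<oplus>\<^bsub>pow_mod W n\<^esub> z))"
  note pp = Y.proj_props[OF N N' int dec pr_def]
  have sN: "N \<subseteq> carrier (pow_mod W n)" using N by (simp add: submod_def)
  have hl': "lin_map A P (pow_mod W n) h" using hl sN unfolding lin_map_def by (simp add: Pi_def subset_iff)
  define hi where "hi = inv_into (carrier P) h"
  have hi1: "hi y \<in> carrier P" "h (hi y) = y" if "y \<in> N" for y
    using hb that unfolding hi_def bij_betw_def by (auto intro: inv_into_into f_inv_into_f)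
  have hi2: "hi (h x) = x" if "x \<in> carrier P" for x
    using hb that unfolding hi_def bij_betw_def by (simp add: inv_into_f_f)
  have hinj: "x = y" if "x \<in> carrier P" "y \<in> carrier P" "h x = h y" for x y
    using hb that unfolding bij_betw_def inj_on_def by blast
  have gl: "lin_map A (pow_mod W n) P (hi \<circ> pr)"
    unfolding lin_map_def
  proof (intro conjI ballI)
    show "hi \<circ> pr \<in> carrier (pow_mod W n) \<rightarrow> carrier P"
    proof (rule funcsetI)
      fix x assume "x \<in> carrier (pow_mod W n)"
      then show "(hi \<circ> pr) x \<in> carrier P" using hi1(1)[OF pp(1)] by simp
    qed
    fix x y assume x: "x \<in> carrier (pow_mod W n)" and y: "y \<in> carrier (pow_mod W n)"
    have px: "pr x \<in> N" "pr y \<in> N" using pp(1) x y by auto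
    have c: "hi (pr x) \<in> carrier P" "hi (pr y) \<in> carrier P" using hi1(1)[OF px(1)] hi1(1)[OF px(2)] .
    have "h (hi (pr x) \<oplus>\<^bsub>P\<^esub> hi (pr y)) = pr x \<oplus>\<^bsub>pow_mod W n\<^esub> pr y"
      using lin_map_add[OF hl' c] hi1(2)[OF px(1)] hi1(2)[OF px(2)] by simp
    then have "hi (pr x \<oplus>\<^bsub>pow_mod W n\<^esub> pr y) = hi (pr x) \<oplus>\<^bsub>P\<^esub> hi (pr y)"
      using hi2[OF P.add.m_closed[OF c]] by simp
    then show "(hi \<circ> pr) (x \<oplus>\<^bsub>pow_mod W n\<^esub> y) = (hi \<circ> pr) x \<oplus>\<^bsub>P\<^esub> (hi \<circ> pr) y"
      using pp(3)[OF x y] by simp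
  next
    fix r x assume r: "r \<in> carrier A" and x: "x \<in> carrier (pow_mod W n)"
    have px: "pr x \<in> N" using pp(1) x by auto
    have c: "hi (pr x) \<in> carrier P" using hi1(1)[OF px] .
    have "h (smult P r (hi (pr x))) = smult (pow_mod W n) r (pr x)"
      using lin_map_smult[OF hl' r c] hi1(2)[OF px] by simp
    then have "hi (smult (pow_mod W n) r (pr x)) = smult P r (hi (pr x))"
      using hi2[OF P.lsmult_closed[OF r c]] by simp
    then show "(hi \<circ> pr) (smult (pow_mod W n) r x) = smult P r ((hi \<circ> pr) x)"
      using pp(4)[OF r x] by simp
  qed
  have "retr A P (pow_mod W n) h (hi \<circ> pr)"
    unfolding retr_def
  proof (intro conjI ballI)
    show "lin_map A P (pow_mod W n) h" by (rule hl')
    show "lin_map A (pow_mod W n) P (hi \<circ> pr)" by (rule gl)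
    fix x assume x: "x \<in> carrier P"
    have "h x \<in> N" using hb x by (auto simp: bij_betw_def)
    then show "(hi \<circ> pr) (h x) = x" using pp(2) hi2[OF x] by simp
  qed
  then show ?thesis by blast
qed


lemma retr_in_add:
  assumes W: "lmodule A W" and P: "lmodule A P" and r: "retr A P (pow_mod W n) f g"
  shows "in_add A W P"
proof -
  interpret Y: lmodule A "pow_mod W n" using lmodule_pow_mod[OF W] .
  interpret P: lmodule A P by fact
  have fl: "lin_map A P (pow_mod W n) f" and gl: "lin_map A (pow_mod W n) P g"
    and gf: "\<And>x. x \<in> carrier P \<Longrightarrow> g (f x) = x" using r by (auto simp: retr_def)
  define N where "N = f ` carrier P"
  define N' where "N' = {y \<in> carrier (pow_mod W n). g y = \<zero>\<^bsub>P\<^esub>}"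
  have f0: "f \<zero>\<^bsub>P\<^esub> = \<zero>\<^bsub>pow_mod W n\<^esub>" by (rule lin_map_zero[OF P.abelian_group_axioms Y.abelian_group_axioms fl])
  have g0: "g \<zero>\<^bsub>pow_mod W n\<^esub> = \<zero>\<^bsub>P\<^esub>" by (rule lin_map_zero[OF Y.abelian_group_axioms P.abelian_group_axioms gl])
  have sN: "submod A (pow_mod W n) N"
    unfolding submod_def
  proof (intro conjI ballI)
    show "N \<subseteq> carrier (pow_mod W n)" using lin_map_closed[OF fl] by (auto simp: N_def)
    show "\<zero>\<^bsub>pow_mod W n\<^esub> \<in> N" unfolding N_def using f0[symmetric] P.zero_closed by (rule image_eqI)
    fix x y assume "x \<in> N" "y \<in> N"
    then obtain a b where ab: "a \<in> carrier P" "b \<in> carrier P" "x = f a" "y = f b" by (auto simp: N_def)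
    then have "x \<oplus>\<^bsub>pow_mod W n\<^esub> y = f (a \<oplus>\<^bsub>P\<^esub> b)" using lin_map_add[OF fl] by simp
    then show "x \<oplus>\<^bsub>pow_mod W n\<^esub> y \<in> N" unfolding N_def using ab by (simp add: image_eqI)
  next
    fix r x assume r: "r \<in> carrier A" and "x \<in> N"
    then obtain a where a: "a \<in> carrier P" "x = f a" by (auto simp: N_def)
    then have "smult (pow_mod W n) r x = f (smult P r a)" using lin_map_smult[OF fl r] by simp
    then show "smult (pow_mod W n) r x \<in> N" unfolding N_def using a r P.lsmult_closed by (simp add: image_eqI)
  qed
  have sN': "submod A (pow_mod W n) N'"
    unfolding submod_def
  proof (intro conjI ballI)
    show "N' \<subseteq> carrier (pow_mod W n)" by (auto simp: N'_def)
    show "\<zero>\<^bsub>pow_mod W n\<^esub> \<in> N'" using g0 by (simp add: N'_def)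
    fix x y assume "x \<in> N'" "y \<in> N'"
    then show "x \<oplus>\<^bsub>pow_mod W n\<^esub> y \<in> N'" using lin_map_add[OF gl] by (simp add: N'_def)
  next
    fix r x assume r: "r \<in> carrier A" and "x \<in> N'"
    then show "smult (pow_mod W n) r x \<in> N'" using lin_map_smult[OF gl r] P.smult_zero_right[OF r]
      by (simp add: N'_def Y.lsmult_closed)
  qed
  have int: "N \<inter> N' = {\<zero>\<^bsub>pow_mod W n\<^esub>}"
  proof
    show "N \<inter> N' \<subseteq> {\<zero>\<^bsub>pow_mod W n\<^esub>}"
    proof
      fix y assume "y \<in> N \<inter> N'"
      then obtain a where a: "a \<in> carrier P" "y = f a" "g y = \<zero>\<^bsub>P\<^esub>" by (auto simp: N_def N'_def)
      then have "a = \<zero>\<^bsub>P\<^esub>" using gf by simp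
      then show "y \<in> {\<zero>\<^bsub>pow_mod W n\<^esub>}" using a f0 by simp
    qed
    show "{\<zero>\<^bsub>pow_mod W n\<^esub>} \<subseteq> N \<inter> N'" using sN sN' by (simp add: submod_def)
  qed
  have dec: "\<forall>x\<in>carrier (pow_mod W n). \<exists>y\<in>N. \<exists>z\<in>N'. x = y \<oplus>\<^bsub>pow_mod W n\<^esub> z"
  proof
    fix x assume x: "x \<in> carrier (pow_mod W n)"
    have gx: "g x \<in> carrier P" using lin_map_closed[OF gl x] .
    have fgx: "f (g x) \<in> carrier (pow_mod W n)" using lin_map_closed[OF fl gx] .
    have "g (x \<ominus>\<^bsub>pow_mod W n\<^esub> f (g x)) = g x \<ominus>\<^bsub>P\<^esub> g (f (g x))"
      using lin_map_minus[OF Y.abelian_group_axioms P.abelian_group_axioms gl x fgx] .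
    also have "\<dots> = \<zero>\<^bsub>P\<^esub>" using gf[OF gx] gx by (simp add: P.r_neg P.minus_eq)
    finally have "x \<ominus>\<^bsub>pow_mod W n\<^esub> f (g x) \<in> N'" using x fgx by (simp add: N'_def)
    moreover have "x = f (g x) \<oplus>\<^bsub>pow_mod W n\<^esub> (x \<ominus>\<^bsub>pow_mod W n\<^esub> f (g x))"
      using x fgx by (simp add: Y.minus_eq Y.a_comm[of x] Y.r_neg2)
    moreover have "f (g x) \<in> N" using gx by (simp add: N_def)
    ultimately show "\<exists>y\<in>N. \<exists>z\<in>N'. x = y \<oplus>\<^bsub>pow_mod W n\<^esub> z" by blast
  qed
  have iso: "lmod_iso A P ((pow_mod W n)\<lparr>carrier := N\<rparr>)"
    unfolding lmod_iso_def
  proof (intro exI conjI)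
    show "lin_map A P ((pow_mod W n)\<lparr>carrier := N\<rparr>) f"
      using fl unfolding lin_map_def N_def by auto
    have "bij_betw f (carrier P) N"
      unfolding bij_betw_def N_def inj_on_def using gf by metis
    then show "bij_betw f (carrier P) (carrier ((pow_mod W n)\<lparr>carrier := N\<rparr>))" by simp
  qed
  show ?thesis unfolding in_add_def using sN sN' int dec iso by blast
qed

lemma retr_comp:
  assumes "retr A P Q f g" "retr A Q Z f' g'"
  shows "retr A P Z (f' \<circ> f) (g \<circ> g')"
  using assms unfolding retr_def lin_map_def by (auto simp: Pi_def)


lemma restr_pow: "restr l (pow_mod T n) = pow_mod (restr l T) n"
  by (simp add: restr_def pow_mod_def)

lemma lin_map_restr:
  assumes "\<And>r. r \<in> carrier R \<Longrightarrow> l r \<in> carrier S" "lin_map S P Q f"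
  shows "lin_map R (restr l P) (restr l Q) f"
  using assms unfolding lin_map_def restr_def by auto

lemma retr_restr:
  assumes "\<And>r. r \<in> carrier R \<Longrightarrow> l r \<in> carrier S" "retr S P Q f g"
  shows "retr R (restr l P) (restr l Q) f g"
proof -
  have "lin_map R (restr l P) (restr l Q) f" "lin_map R (restr l Q) (restr l P) g"
    using lin_map_restr[OF assms(1)] assms(2) unfolding retr_def by auto
  moreover have "carrier (restr l P) = carrier P" by (simp add: restr_def)
  ultimately show ?thesis using assms(2) unfolding retr_def by simp
qed

lemma lmodule_restr:
  assumes R: "ring R" and h: "l \<in> ring_hom R S" and M: "lmodule S M"
  shows "lmodule R (restr l M)"
proof -
  interpret M: lmodule S M by fact
  interpret R: ring R by fact
  have hc: "\<And>r. r \<in> carrier R \<Longrightarrow> l r \<in> carrier S" using h by (simp add: ring_hom_closed)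
  have ag: "abelian_group (restr l M)"
    by (rule abelian_groupI) (auto simp: restr_def M.a_ac intro: M.l_neg)
  show ?thesis
  proof (rule lmodule.intro[OF R ag], rule lmodule_axioms.intro)
    show "\<And>a x. a \<in> carrier R \<Longrightarrow> x \<in> carrier (restr l M) \<Longrightarrow> smult (restr l M) a x \<in> carrier (restr l M)"
      using hc M.lsmult_closed by (simp add: restr_def)
    show "\<And>a b x. a \<in> carrier R \<Longrightarrow> b \<in> carrier R \<Longrightarrow> x \<in> carrier (restr l M) \<Longrightarrow>
      smult (restr l M) (a \<oplus>\<^bsub>R\<^esub> b) x = smult (restr l M) a x \<oplus>\<^bsub>restr l M\<^esub> smult (restr l M) b x"
      using hc M.lsmult_l_distr h by (simp add: restr_def ring_hom_add)
    show "\<And>a x y. a \<in> carrier R \<Longrightarrow> x \<in> carrier (restr l M) \<Longrightarrow> y \<in> carrier (restr l M) \<Longrightarrow>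
      smult (restr l M) a (x \<oplus>\<^bsub>restr l M\<^esub> y) = smult (restr l M) a x \<oplus>\<^bsub>restr l M\<^esub> smult (restr l M) a y"
      using hc M.lsmult_r_distr by (simp add: restr_def)
    show "\<And>a b x. a \<in> carrier R \<Longrightarrow> b \<in> carrier R \<Longrightarrow> x \<in> carrier (restr l M) \<Longrightarrow>
      smult (restr l M) (a \<otimes>\<^bsub>R\<^esub> b) x = smult (restr l M) a (smult (restr l M) b x)"
      using hc M.lsmult_assoc h by (simp add: restr_def ring_hom_mult)
    show "\<And>x. x \<in> carrier (restr l M) \<Longrightarrow> smult (restr l M) \<one>\<^bsub>R\<^esub> x = x"
      using M.lsmult_one h by (simp add: restr_def ring_hom_one)
  qed
qed



definition fneg :: "('p \<Rightarrow> int) \<Rightarrow> ('p \<Rightarrow> int)" where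
  "fneg x = (\<lambda>p. - x p)"

lemma fadd_apply: "fadd a b p = a p + b p" by (simp add: fadd_def)
lemma fdiff_apply: "fdiff a b p = a p - b p" by (simp add: fdiff_def)
lemma fneg_apply: "fneg a p = - a p" by (simp add: fneg_def)
lemmas fsimps = fadd_apply fdiff_apply fneg_apply

lemma fdiff_fadd: "fdiff a b = fadd a (fneg b)" by (auto simp: fun_eq_iff fsimps)

lemma tfree_zero: "(\<lambda>_. 0) \<in> tfree S W" by (simp add: tfree_def)

lemma tfree_fadd:
  assumes "a \<in> tfree S W" "b \<in> tfree S W" shows "fadd a b \<in> tfree S W"
proof -
  have "{p. fadd a b p \<noteq> 0} \<subseteq> {p. a p \<noteq> 0} \<union> {p. b p \<noteq> 0}" by (auto simp: fsimps)
  then show ?thesis using assms unfolding tfree_def by (auto intro: finite_subset)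
qed

lemma tfree_fneg:
  assumes "a \<in> tfree S W" shows "fneg a \<in> tfree S W"
  using assms unfolding tfree_def by (simp add: fsimps)

lemma tfree_fdiff:
  assumes "a \<in> tfree S W" "b \<in> tfree S W" shows "fdiff a b \<in> tfree S W"
  using tfree_fadd[OF assms(1) tfree_fneg[OF assms(2)]] by (simp add: fdiff_fadd)

lemma tfree_delta:
  assumes "p \<in> carrier S \<times> carrier W" shows "tdelta p \<in> tfree S W"
proof -
  have "{q. tdelta p q \<noteq> 0} = {p}" by (auto simp: tdelta_def)
  then show ?thesis using assms unfolding tfree_def by simp
qed

lemma tfree_finite: "c \<in> tfree S W \<Longrightarrow> finite {p. c p \<noteq> 0}"
  by (simp add: tfree_def)

lemma tfree_sub: "c \<in> tfree S W \<Longrightarrow> c p \<noteq> 0 \<Longrightarrow> p \<in> carrier S \<times> carrier W"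
  by (auto simp: tfree_def)

lemma tfree_induct [consumes 1, case_names zero step]:
  assumes c: "c \<in> tfree S W"
    and z: "P (\<lambda>_. 0)"
    and st: "\<And>c p. c \<in> tfree S W \<Longrightarrow> p \<in> carrier S \<times> carrier W \<Longrightarrow> P c \<Longrightarrow>
       P (fadd c (tdelta p)) \<and> P (fadd c (fneg (tdelta p)))"
  shows "P c"
proof -
  have "\<forall>c. c \<in> tfree S W \<and> {p. c p \<noteq> 0} \<subseteq> F \<longrightarrow> P c" if "finite F" for F
    using that
  proof (induction F rule: finite_induct)
    case empty
    then show ?case
    proof (intro allI impI)
      fix c assume "c \<in> tfree S W \<and> {p. c p \<noteq> 0} \<subseteq> {}"
      then have "c = (\<lambda>_. 0)" by auto
      then show "P c" using z by simp
    qed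
  next
    case (insert p F)
    show ?case
    proof (intro allI impI)
      fix c assume a: "c \<in> tfree S W \<and> {p. c p \<noteq> 0} \<subseteq> insert p F"
      define c0 where "c0 = c(p := 0)"
      have c0f: "c0 \<in> tfree S W" using a unfolding tfree_def c0_def
        by (auto elim: finite_subset[rotated])
      have "{q. c0 q \<noteq> 0} \<subseteq> F" using a by (auto simp: c0_def)
      then have Pc0: "P c0" using insert.IH c0f by blast
      show "P c"
      proof (cases "c p = 0")
        case True
        then have "c = c0" by (auto simp: c0_def)
        then show ?thesis using Pc0 by simp
      next
        case False
        then have p: "p \<in> carrier S \<times> carrier W" using a by (auto simp: tfree_def)
        have fm: "c0(p := m) \<in> tfree S W" for m
        proof -
          have "c0(p := m) = fadd c0 (\<lambda>q. if q = p then m else 0)"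
            by (auto simp: c0_def fun_eq_iff fsimps)
          moreover have "(\<lambda>q. if q = p then m else 0) \<in> tfree S W"
          proof -
            have "{q. (if q = p then m else 0) \<noteq> 0} \<subseteq> {p}" by auto
            then show ?thesis using p unfolding tfree_def by (auto intro: finite_subset)
          qed
          ultimately show ?thesis using tfree_fadd c0f by simp
        qed
        have "P (c0(p := m))" for m :: int
        proof (induction m rule: int_induct[where k=0])
          case base
          have "c0(p := 0) = c0" by (auto simp: c0_def)
          then show ?case using Pc0 by simp
        next
          case (step1 i)
          have e: "c0(p := i + 1) = fadd (c0(p := i)) (tdelta p)"
            by (auto simp: fun_eq_iff tdelta_def fsimps)
          show ?case unfolding e using st[OF fm p step1(2)] by (rule conjunct1)
        next
          case (step2 i)
          have e: "c0(p := i - 1) = fadd (c0(p := i)) (fneg (tdelta p))"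
            by (auto simp: fun_eq_iff tdelta_def fsimps)
          show ?case unfolding e using st[OF fm p step2(2)] by (rule conjunct2)
        qed
        moreover have "c = c0(p := c p)" by (auto simp: c0_def)
        ultimately show ?thesis by metis
      qed
    qed
  qed
  then show ?thesis using c by (auto simp: tfree_def)
qed


lemma (in abelian_group) cancel3: "x \<in> carrier G \<Longrightarrow> y \<in> carrier G \<Longrightarrow> (x \<oplus> y) \<ominus> x \<ominus> y = \<zero>"
proof -
  assume c: "x \<in> carrier G" "y \<in> carrier G"
  have "(x \<oplus> y) \<ominus> x = y" using c by (simp add: minus_eq a_comm[of x y] a_assoc r_neg)
  then show ?thesis using c by (simp add: minus_eq r_neg)
qed

lemma (in abelian_group) idem_zero: "x \<in> carrier G \<Longrightarrow> x \<oplus> x = x \<Longrightarrow> x = \<zero>"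
  by (metis add.l_cancel_one' r_zero zero_closed)

lemma tfree_additive_eq:
  assumes G: "abelian_group G"
    and La: "\<And>c. c \<in> tfree S W \<Longrightarrow> La c \<in> carrier G"
    and Lb: "\<And>c. c \<in> tfree S W \<Longrightarrow> Lb c \<in> carrier G"
    and a1: "\<And>a b. a \<in> tfree S W \<Longrightarrow> b \<in> tfree S W \<Longrightarrow> La (fadd a b) = La a \<oplus>\<^bsub>G\<^esub> La b"
    and a2: "\<And>a b. a \<in> tfree S W \<Longrightarrow> b \<in> tfree S W \<Longrightarrow> Lb (fadd a b) = Lb a \<oplus>\<^bsub>G\<^esub> Lb b"
    and d: "\<And>p. p \<in> carrier S \<times> carrier W \<Longrightarrow> La (tdelta p) = Lb (tdelta p)"
    and c: "c \<in> tfree S W"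
  shows "La c = Lb c"
proof -
  interpret G: abelian_group G by fact
  have z0: "fadd (\<lambda>_. 0) (\<lambda>_. 0) = (\<lambda>_. 0)" by (simp add: fun_eq_iff fsimps)
  have La0: "La (\<lambda>_. 0) = \<zero>\<^bsub>G\<^esub>"
  proof -
    have "La (\<lambda>_. 0) \<oplus>\<^bsub>G\<^esub> La (\<lambda>_. 0) = La (\<lambda>_. 0)"
      using a1[OF tfree_zero tfree_zero] by (subst (asm) z0) (erule sym)
    then show ?thesis by (rule G.idem_zero[OF La[OF tfree_zero]])
  qed
  have Lb0: "Lb (\<lambda>_. 0) = \<zero>\<^bsub>G\<^esub>"
  proof -
    have "Lb (\<lambda>_. 0) \<oplus>\<^bsub>G\<^esub> Lb (\<lambda>_. 0) = Lb (\<lambda>_. 0)"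
      using a2[OF tfree_zero tfree_zero] by (subst (asm) z0) (erule sym)
    then show ?thesis by (rule G.idem_zero[OF Lb[OF tfree_zero]])
  qed
  have nd: "La (fneg (tdelta p)) = Lb (fneg (tdelta p))" if p: "p \<in> carrier S \<times> carrier W" for p
  proof -
    have e: "fadd (fneg (tdelta p)) (tdelta p) = (\<lambda>_. 0)" by (simp add: fun_eq_iff fsimps)
    have t: "tdelta p \<in> tfree S W" "fneg (tdelta p) \<in> tfree S W" using tfree_delta[OF p] tfree_fneg by auto
    have "La (fneg (tdelta p)) \<oplus>\<^bsub>G\<^esub> La (tdelta p) = \<zero>\<^bsub>G\<^esub>" using a1[OF t(2) t(1)] e La0 by simp
    then have 1: "La (fneg (tdelta p)) = \<ominus>\<^bsub>G\<^esub> La (tdelta p)" using La t by (metis G.add.inv_equality)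
    have "Lb (fneg (tdelta p)) \<oplus>\<^bsub>G\<^esub> Lb (tdelta p) = \<zero>\<^bsub>G\<^esub>" using a2[OF t(2) t(1)] e Lb0 by simp
    then have 2: "Lb (fneg (tdelta p)) = \<ominus>\<^bsub>G\<^esub> Lb (tdelta p)" using Lb t by (metis G.add.inv_equality)
    show ?thesis using 1 2 d[OF p] by simp
  qed
  show ?thesis using c
  proof (induction rule: tfree_induct)
    case zero then show ?case using La0 Lb0 by simp
  next
    case (step c p)
    have t: "tdelta p \<in> tfree S W" "fneg (tdelta p) \<in> tfree S W" using tfree_delta[OF step(2)] tfree_fneg by auto
    show ?case using a1[OF step(1) t(1)] a2[OF step(1) t(1)] a1[OF step(1) t(2)] a2[OF step(1) t(2)]
      step(3) d[OF step(2)] nd[OF step(2)] by simp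
  qed
qed

section \<open>The tensor product\<close>

locale tens = W: lmodule R W + S: ring S
  for R :: "('r,'c) ring_scheme" and W :: "('r,'w,'x) module_scheme" and S :: "('s,'d) ring_scheme" +
  fixes l :: "'r \<Rightarrow> 's"
  assumes hom: "l \<in> ring_hom R S"
begin

abbreviation "TF \<equiv> tfree S W"
abbreviation "TR \<equiv> trel R S l W"
abbreviation "cls \<equiv> tcls R S l W"
abbreviation "T \<equiv> tensor R S l W"

lemma lc: "r \<in> carrier R \<Longrightarrow> l r \<in> carrier S"
  using hom by (simp add: ring_hom_closed)

lemma gens_tfree: "tgens R S l W \<subseteq> TF"
  unfolding tgens_def
  by (auto intro!: tfree_fdiff tfree_delta simp: lc W.lsmult_closed)

lemma trel_min:
  assumes "tgens R S l W \<subseteq> H" "H \<subseteq> TF" "(\<lambda>_. 0) \<in> H" "\<forall>x\<in>H. \<forall>y\<in>H. fdiff x y \<in> H"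
  shows "TR \<subseteq> H"
  unfolding trel_def using assms by (intro Inter_lower) simp

lemma trel_props:
  shows "TR \<subseteq> TF" "tgens R S l W \<subseteq> TR" "(\<lambda>_. 0) \<in> TR"
    and "\<And>x y. x \<in> TR \<Longrightarrow> y \<in> TR \<Longrightarrow> fdiff x y \<in> TR"
proof -
  show "TR \<subseteq> TF" by (rule trel_min[OF gens_tfree]) (auto intro: tfree_zero tfree_fdiff)
  show "tgens R S l W \<subseteq> TR" unfolding trel_def by auto
  show "(\<lambda>_. 0) \<in> TR" unfolding trel_def by auto
  show "\<And>x y. x \<in> TR \<Longrightarrow> y \<in> TR \<Longrightarrow> fdiff x y \<in> TR" unfolding trel_def by auto
qed

lemma trel_fneg: "x \<in> TR \<Longrightarrow> fneg x \<in> TR"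
proof -
  assume "x \<in> TR"
  then have "fdiff (\<lambda>_. 0) x \<in> TR" using trel_props by auto
  moreover have "fdiff (\<lambda>_. 0) x = fneg x" by (simp add: fun_eq_iff fsimps)
  ultimately show ?thesis by simp
qed

lemma trel_fadd: "x \<in> TR \<Longrightarrow> y \<in> TR \<Longrightarrow> fadd x y \<in> TR"
proof -
  assume "x \<in> TR" "y \<in> TR"
  then have "fdiff x (fneg y) \<in> TR" using trel_props trel_fneg by auto
  moreover have "fdiff x (fneg y) = fadd x y" by (simp add: fun_eq_iff fsimps)
  ultimately show ?thesis by simp
qed

lemma trel_tfree: "x \<in> TR \<Longrightarrow> x \<in> TF" using trel_props by auto

lemma gen1: "s \<in> carrier S \<Longrightarrow> s' \<in> carrier S \<Longrightarrow> w \<in> carrier W \<Longrightarrow>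
   fdiff (fdiff (tdelta (s \<oplus>\<^bsub>S\<^esub> s', w)) (tdelta (s, w))) (tdelta (s', w)) \<in> TR"
  using trel_props(2) unfolding tgens_def by blast

lemma gen2: "s \<in> carrier S \<Longrightarrow> w \<in> carrier W \<Longrightarrow> w' \<in> carrier W \<Longrightarrow>
   fdiff (fdiff (tdelta (s, w \<oplus>\<^bsub>W\<^esub> w')) (tdelta (s, w))) (tdelta (s, w')) \<in> TR"
  using trel_props(2) unfolding tgens_def by blast

lemma gen3: "s \<in> carrier S \<Longrightarrow> r \<in> carrier R \<Longrightarrow> w \<in> carrier W \<Longrightarrow>
   fdiff (tdelta (s \<otimes>\<^bsub>S\<^esub> l r, w)) (tdelta (s, smult W r w)) \<in> TR"
  using trel_props(2) unfolding tgens_def by blast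

lemma cls_mem: "d \<in> cls c \<longleftrightarrow> d \<in> TF \<and> fdiff d c \<in> TR"
  by (simp add: tcls_def)

lemma cls_self: "a \<in> TF \<Longrightarrow> a \<in> cls a"
proof -
  assume "a \<in> TF"
  moreover have "fdiff a a = (\<lambda>_. 0)" by (simp add: fun_eq_iff fsimps)
  ultimately show ?thesis using trel_props by (simp add: cls_mem)
qed

lemma cls_eq_iff:
  assumes "a \<in> TF" "b \<in> TF"
  shows "cls a = cls b \<longleftrightarrow> fdiff a b \<in> TR"
proof
  assume "cls a = cls b"
  then show "fdiff a b \<in> TR" using cls_self[OF assms(1)] by (simp add: cls_mem)
next
  assume ab: "fdiff a b \<in> TR"
  show "cls a = cls b"
    unfolding set_eq_iff
  proof
    fix d
    have e1: "fdiff d b = fadd (fdiff d a) (fdiff a b)" by (simp add: fun_eq_iff fsimps)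
    have e2: "fdiff d a = fadd (fdiff d b) (fneg (fdiff a b))" by (simp add: fun_eq_iff fsimps)
    have "fdiff d a \<in> TR \<longleftrightarrow> fdiff d b \<in> TR"
    proof
      assume "fdiff d a \<in> TR"
      then show "fdiff d b \<in> TR" unfolding e1 using ab by (rule trel_fadd)
    next
      assume "fdiff d b \<in> TR"
      then show "fdiff d a \<in> TR" unfolding e2 using trel_fneg[OF ab] by (rule trel_fadd)
    qed
    then show "d \<in> cls a \<longleftrightarrow> d \<in> cls b" by (simp add: cls_mem)
  qed
qed

lemma cls_eqI: "a \<in> TF \<Longrightarrow> b \<in> TF \<Longrightarrow> fdiff a b \<in> TR \<Longrightarrow> cls a = cls b"
  using cls_eq_iff by blast

lemma cls_of_mem: "a \<in> TF \<Longrightarrow> d \<in> cls a \<Longrightarrow> cls d = cls a"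
  using cls_eq_iff by (auto simp: cls_mem)

lemma T_carrier: "carrier T = cls ` TF" by (simp add: tensor_def)
lemma T_zero: "\<zero>\<^bsub>T\<^esub> = cls (\<lambda>_. 0)" by (simp add: tensor_def)

lemma T_add: 
  assumes "a \<in> TF" "b \<in> TF"
  shows "cls a \<oplus>\<^bsub>T\<^esub> cls b = cls (fadd a b)"
proof -
  have "cls (fadd a' b') = cls (fadd a b)" if "a' \<in> cls a" "b' \<in> cls b" for a' b'
  proof (rule cls_eqI)
    show "fadd a' b' \<in> TF" "fadd a b \<in> TF" using that assms by (auto simp: cls_mem intro: tfree_fadd)
    have "fdiff (fadd a' b') (fadd a b) = fadd (fdiff a' a) (fdiff b' b)" by (simp add: fun_eq_iff fsimps)
    then show "fdiff (fadd a' b') (fadd a b) \<in> TR" using that trel_fadd by (simp add: cls_mem)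
  qed
  then have "{cls (fadd a' b') | a' b'. a' \<in> cls a \<and> b' \<in> cls b} = {cls (fadd a b)}"
    using cls_self assms by blast
  then show ?thesis by (simp add: tensor_def)
qed

lemma T_abelian: "abelian_group T"
proof (rule abelian_groupI)
  show "\<zero>\<^bsub>T\<^esub> \<in> carrier T" by (simp add: T_carrier T_zero tfree_zero)
  fix x y z assume x: "x \<in> carrier T" and y: "y \<in> carrier T"
  then obtain a b where ab: "a \<in> TF" "b \<in> TF" "x = cls a" "y = cls b" by (auto simp: T_carrier)
  show "x \<oplus>\<^bsub>T\<^esub> y \<in> carrier T" using ab T_add tfree_fadd[OF ab(1,2)] by (simp add: T_carrier)
  have "fadd a b = fadd b a" by (simp add: fun_eq_iff fsimps)
  then show "x \<oplus>\<^bsub>T\<^esub> y = y \<oplus>\<^bsub>T\<^esub> x" using ab T_add by simp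
  assume z: "z \<in> carrier T"
  then obtain c where c: "c \<in> TF" "z = cls c" by (auto simp: T_carrier)
  have "fadd (fadd a b) c = fadd a (fadd b c)" by (simp add: fun_eq_iff fsimps)
  then show "x \<oplus>\<^bsub>T\<^esub> y \<oplus>\<^bsub>T\<^esub> z = x \<oplus>\<^bsub>T\<^esub> (y \<oplus>\<^bsub>T\<^esub> z)"
    using ab c T_add[OF ab(1,2)] T_add[OF ab(2) c(1)] T_add[OF tfree_fadd[OF ab(1,2)] c(1)]
      T_add[OF ab(1) tfree_fadd[OF ab(2) c(1)]] by simp
next
  fix x assume x: "x \<in> carrier T"
  then obtain a where a: "a \<in> TF" "x = cls a" by (auto simp: T_carrier)
  have "fadd (\<lambda>_. 0) a = a" by (simp add: fun_eq_iff fsimps)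
  then show "\<zero>\<^bsub>T\<^esub> \<oplus>\<^bsub>T\<^esub> x = x" using a T_add[OF tfree_zero a(1)] by (simp add: T_zero)
  have "fadd (fneg a) a = (\<lambda>_. 0)" by (simp add: fun_eq_iff fsimps)
  then have "cls (fneg a) \<oplus>\<^bsub>T\<^esub> x = \<zero>\<^bsub>T\<^esub>" using a T_add[OF tfree_fneg[OF a(1)] a(1)] by (simp add: T_zero)
  moreover have "cls (fneg a) \<in> carrier T" using tfree_fneg[OF a(1)] by (simp add: T_carrier)
  ultimately show "\<exists>y\<in>carrier T. y \<oplus>\<^bsub>T\<^esub> x = \<zero>\<^bsub>T\<^esub>" by blast
qed


lemma tact_fin: "c \<in> TF \<Longrightarrow> finite {u. c (u, w) \<noteq> 0}"
proof -
  assume c: "c \<in> TF"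
  have "{u. c (u, w) \<noteq> 0} \<subseteq> fst ` {p. c p \<noteq> 0}" by (auto intro: image_eqI[of _ fst "(_, w)"])
  then show ?thesis using tfree_finite[OF c] by (auto intro: finite_subset)
qed

lemma tact_superset:
  assumes "finite U" "{u. c (u, w) \<noteq> 0} \<subseteq> U"
  shows "tact S s c (t, w) = (\<Sum>u\<in>{u\<in>U. s \<otimes>\<^bsub>S\<^esub> u = t}. c (u, w))"
  unfolding tact_def using assms by (auto intro!: sum.mono_neutral_left)

lemma tact_fadd:
  assumes a: "a \<in> TF" and b: "b \<in> TF"
  shows "tact S s (fadd a b) = fadd (tact S s a) (tact S s b)"
proof (rule ext, clarify)
  fix t w
  define U where "U = {u. a (u, w) \<noteq> 0} \<union> {u. b (u, w) \<noteq> 0}"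
  have U: "finite U" using tact_fin[OF a] tact_fin[OF b] by (simp add: U_def)
  have sub: "{u. fadd a b (u, w) \<noteq> 0} \<subseteq> U" by (auto simp: U_def fsimps)
  have suba: "{u. a (u, w) \<noteq> 0} \<subseteq> U" and subb: "{u. b (u, w) \<noteq> 0} \<subseteq> U" by (auto simp: U_def)
  have "tact S s (fadd a b) (t, w) = (\<Sum>u\<in>{u\<in>U. s \<otimes>\<^bsub>S\<^esub> u = t}. fadd a b (u, w))"
    by (rule tact_superset[OF U sub])
  also have "\<dots> = (\<Sum>u\<in>{u\<in>U. s \<otimes>\<^bsub>S\<^esub> u = t}. a (u, w)) + (\<Sum>u\<in>{u\<in>U. s \<otimes>\<^bsub>S\<^esub> u = t}. b (u, w))"
    by (simp add: fsimps sum.distrib)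
  also have "\<dots> = tact S s a (t, w) + tact S s b (t, w)"
    using tact_superset[OF U suba] tact_superset[OF U subb] by simp
  finally show "tact S s (fadd a b) (t, w) = fadd (tact S s a) (tact S s b) (t, w)" by (simp add: fsimps)
qed

lemma tact_fneg: "tact S s (fneg a) = fneg (tact S s a)"
  unfolding tact_def by (auto simp: fun_eq_iff fsimps sum_negf)

lemma tact_fdiff:
  assumes a: "a \<in> TF" and b: "b \<in> TF"
  shows "tact S s (fdiff a b) = fdiff (tact S s a) (tact S s b)"
  using tact_fadd[OF a tfree_fneg[OF b]] by (simp add: fdiff_fadd tact_fneg)

lemma tact_zero: "tact S s (\<lambda>_. 0) = (\<lambda>_. 0)"
  unfolding tact_def by auto

lemma tact_delta: "tact S s (tdelta (u, w0)) = tdelta (s \<otimes>\<^bsub>S\<^esub> u, w0)"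
proof (rule ext, clarify)
  fix t w
  have "{u'. tdelta (u, w0) (u', w) \<noteq> 0 \<and> s \<otimes>\<^bsub>S\<^esub> u' = t} = (if w = w0 \<and> s \<otimes>\<^bsub>S\<^esub> u = t then {u} else {})"
    by (auto simp: tdelta_def)
  then show "tact S s (tdelta (u, w0)) (t, w) = tdelta (s \<otimes>\<^bsub>S\<^esub> u, w0) (t, w)"
    unfolding tact_def by (auto simp: tdelta_def)
qed

lemma tact_tfree:
  assumes c: "c \<in> TF" and s: "s \<in> carrier S"
  shows "tact S s c \<in> TF"
proof -
  have sub: "{p. tact S s c p \<noteq> 0} \<subseteq> (\<lambda>(u, w). (s \<otimes>\<^bsub>S\<^esub> u, w)) ` {p. c p \<noteq> 0}"
  proof
    fix p assume p0: "p \<in> {p. tact S s c p \<noteq> 0}"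
    obtain t w where p: "p = (t, w)" by (cases p)
    have "(\<Sum>u\<in>{u. c (u, w) \<noteq> 0 \<and> s \<otimes>\<^bsub>S\<^esub> u = t}. c (u, w)) \<noteq> 0"
      using p0 p by (simp add: tact_def)
    then obtain u where "u \<in> {u. c (u, w) \<noteq> 0 \<and> s \<otimes>\<^bsub>S\<^esub> u = t}"
      by (meson sum.not_neutral_contains_not_neutral)
    then have u: "c (u, w) \<noteq> 0" "s \<otimes>\<^bsub>S\<^esub> u = t" by auto
    show "p \<in> (\<lambda>(u, w). (s \<otimes>\<^bsub>S\<^esub> u, w)) ` {p. c p \<noteq> 0}"
      by (rule image_eqI[where x="(u, w)"]) (simp_all add: p u)
  qed
  have "finite {p. tact S s c p \<noteq> 0}"
    using tfree_finite[OF c] by (rule finite_subset[OF sub finite_imageI])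
  moreover have "{p. tact S s c p \<noteq> 0} \<subseteq> carrier S \<times> carrier W"
  proof
    fix p assume "p \<in> {p. tact S s c p \<noteq> 0}"
    then obtain q where q: "q \<in> {p. c p \<noteq> 0}" "p = (\<lambda>(u, w). (s \<otimes>\<^bsub>S\<^esub> u, w)) q" using sub by blast
    obtain u w where uw: "q = (u, w)" by (cases q)
    have "u \<in> carrier S" "w \<in> carrier W" using tfree_sub[OF c] q(1) uw by auto
    then show "p \<in> carrier S \<times> carrier W" using q(2) uw s by simp
  qed
  ultimately show ?thesis by (simp add: tfree_def)
qed

lemma tact_trel:
  assumes s: "s \<in> carrier S"
  shows "c \<in> TR \<Longrightarrow> tact S s c \<in> TR"
proof -
  let ?H = "{c \<in> TF. tact S s c \<in> TR}"
  have dl: "tdelta p \<in> TF" if "p \<in> carrier S \<times> carrier W" for p using tfree_delta[OF that] .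
  have "TR \<subseteq> ?H"
  proof (rule trel_min)
    show "tgens R S l W \<subseteq> ?H"
    proof
      fix g assume "g \<in> tgens R S l W"
      then have gT: "g \<in> TF" using gens_tfree by auto
      from \<open>g \<in> tgens R S l W\<close> consider
          (a) s1 s2 w where "s1 \<in> carrier S" "s2 \<in> carrier S" "w \<in> carrier W"
             "g = fdiff (fdiff (tdelta (s1 \<oplus>\<^bsub>S\<^esub> s2, w)) (tdelta (s1, w))) (tdelta (s2, w))"
        | (b) s1 w w' where "s1 \<in> carrier S" "w \<in> carrier W" "w' \<in> carrier W"
             "g = fdiff (fdiff (tdelta (s1, w \<oplus>\<^bsub>W\<^esub> w')) (tdelta (s1, w))) (tdelta (s1, w'))"
        | (c) s1 r w where "s1 \<in> carrier S" "r \<in> carrier R" "w \<in> carrier W"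
             "g = fdiff (tdelta (s1 \<otimes>\<^bsub>S\<^esub> l r, w)) (tdelta (s1, smult W r w))"
        using \<open>g \<in> tgens R S l W\<close> unfolding tgens_def by (elim UnE CollectE exE conjE) (rule that; assumption)+
      then have "tact S s g \<in> TR"
      proof cases
        case a
        have "tact S s g = fdiff (fdiff (tdelta (s \<otimes>\<^bsub>S\<^esub> s1 \<oplus>\<^bsub>S\<^esub> s \<otimes>\<^bsub>S\<^esub> s2, w)) (tdelta (s \<otimes>\<^bsub>S\<^esub> s1, w))) (tdelta (s \<otimes>\<^bsub>S\<^esub> s2, w))"
          using a s by (simp add: tact_fdiff dl tfree_fdiff tact_delta S.r_distr)
        then show ?thesis using gen1 a s by simp
      next
        case b
        have "tact S s g = fdiff (fdiff (tdelta (s \<otimes>\<^bsub>S\<^esub> s1, w \<oplus>\<^bsub>W\<^esub> w')) (tdelta (s \<otimes>\<^bsub>S\<^esub> s1, w))) (tdelta (s \<otimes>\<^bsub>S\<^esub> s1, w'))"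
          using b s by (simp add: tact_fdiff dl tfree_fdiff tact_delta)
        then show ?thesis using gen2 b s by simp
      next
        case c
        have "tact S s g = fdiff (tdelta ((s \<otimes>\<^bsub>S\<^esub> s1) \<otimes>\<^bsub>S\<^esub> l r, w)) (tdelta (s \<otimes>\<^bsub>S\<^esub> s1, smult W r w))"
          using c s by (simp add: tact_fdiff dl tfree_fdiff tact_delta S.m_assoc lc W.lsmult_closed)
        then show ?thesis using gen3 c s by simp
      qed
      then show "g \<in> ?H" using gT by simp
    qed
    show "?H \<subseteq> TF" by auto
    show "(\<lambda>_. 0) \<in> ?H" using tfree_zero trel_props(3) by (simp add: tact_zero)
    show "\<forall>x\<in>?H. \<forall>y\<in>?H. fdiff x y \<in> ?H"
      using tact_fdiff trel_props(4) tfree_fdiff by auto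
  qed
  then show "c \<in> TR \<Longrightarrow> tact S s c \<in> TR" by auto
qed

lemma T_smult:
  assumes a: "a \<in> TF" and s: "s \<in> carrier S"
  shows "smult T s (cls a) = cls (tact S s a)"
proof -
  have "cls (tact S s a') = cls (tact S s a)" if "a' \<in> cls a" for a'
  proof (rule cls_eqI)
    have a': "a' \<in> TF" "fdiff a' a \<in> TR" using that by (auto simp: cls_mem)
    show "tact S s a' \<in> TF" "tact S s a \<in> TF" using tact_tfree a a' s by auto
    show "fdiff (tact S s a') (tact S s a) \<in> TR"
      using tact_trel[OF s a'(2)] tact_fdiff[OF a'(1) a] by simp
  qed
  then have "{cls (tact S s a') | a'. a' \<in> cls a} = {cls (tact S s a)}"
    using cls_self[OF a] by blast
  then show ?thesis by (simp add: tensor_def)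
qed

definition tau :: "'s \<Rightarrow> 'w \<Rightarrow> ('s \<times> 'w \<Rightarrow> int) set" where
  "tau s w = cls (tdelta (s, w))"

lemma tau_closed: "s \<in> carrier S \<Longrightarrow> w \<in> carrier W \<Longrightarrow> tau s w \<in> carrier T"
  unfolding tau_def T_carrier using tfree_delta[of "(s, w)" S W] by auto

lemma tau_add1:
  assumes "s \<in> carrier S" "s' \<in> carrier S" "w \<in> carrier W"
  shows "tau (s \<oplus>\<^bsub>S\<^esub> s') w = tau s w \<oplus>\<^bsub>T\<^esub> tau s' w"
proof -
  have d: "tdelta (s \<oplus>\<^bsub>S\<^esub> s', w) \<in> TF" "tdelta (s, w) \<in> TF" "tdelta (s', w) \<in> TF"
    using assms by (auto intro!: tfree_delta)
  have "fdiff (tdelta (s \<oplus>\<^bsub>S\<^esub> s', w)) (fadd (tdelta (s, w)) (tdelta (s', w)))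
      = fdiff (fdiff (tdelta (s \<oplus>\<^bsub>S\<^esub> s', w)) (tdelta (s, w))) (tdelta (s', w))"
    by (simp add: fun_eq_iff fsimps)
  then have "cls (tdelta (s \<oplus>\<^bsub>S\<^esub> s', w)) = cls (fadd (tdelta (s, w)) (tdelta (s', w)))"
    using gen1[OF assms] d by (intro cls_eqI) (auto intro: tfree_fadd)
  then show ?thesis unfolding tau_def using T_add[OF d(2,3)] by simp
qed

lemma tau_add2:
  assumes "s \<in> carrier S" "w \<in> carrier W" "w' \<in> carrier W"
  shows "tau s (w \<oplus>\<^bsub>W\<^esub> w') = tau s w \<oplus>\<^bsub>T\<^esub> tau s w'"
proof -
  have d: "tdelta (s, w \<oplus>\<^bsub>W\<^esub> w') \<in> TF" "tdelta (s, w) \<in> TF" "tdelta (s, w') \<in> TF"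
    using assms by (auto intro!: tfree_delta)
  have "fdiff (tdelta (s, w \<oplus>\<^bsub>W\<^esub> w')) (fadd (tdelta (s, w)) (tdelta (s, w')))
      = fdiff (fdiff (tdelta (s, w \<oplus>\<^bsub>W\<^esub> w')) (tdelta (s, w))) (tdelta (s, w'))"
    by (simp add: fun_eq_iff fsimps)
  then have "cls (tdelta (s, w \<oplus>\<^bsub>W\<^esub> w')) = cls (fadd (tdelta (s, w)) (tdelta (s, w')))"
    using gen2[OF assms] d by (intro cls_eqI) (auto intro: tfree_fadd)
  then show ?thesis unfolding tau_def using T_add[OF d(2,3)] by simp
qed

lemma tau_l:
  assumes "s \<in> carrier S" "r \<in> carrier R" "w \<in> carrier W"
  shows "tau (s \<otimes>\<^bsub>S\<^esub> l r) w = tau s (smult W r w)"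
  unfolding tau_def using gen3[OF assms] assms
  by (intro cls_eqI) (auto intro!: tfree_delta simp: lc W.lsmult_closed)

lemma tau_smult:
  assumes "s' \<in> carrier S" "s \<in> carrier S" "w \<in> carrier W"
  shows "smult T s' (tau s w) = tau (s' \<otimes>\<^bsub>S\<^esub> s) w"
  unfolding tau_def using T_smult[OF tfree_delta assms(1)] assms by (simp add: tact_delta)


lemma T_cases: "x \<in> carrier T \<Longrightarrow> (\<And>a. a \<in> TF \<Longrightarrow> x = cls a \<Longrightarrow> P) \<Longrightarrow> P"
  by (auto simp: T_carrier)

lemma cls_closed: "a \<in> TF \<Longrightarrow> cls a \<in> carrier T"
  by (simp add: T_carrier)

lemma cls_tact_closed: "a \<in> TF \<Longrightarrow> s \<in> carrier S \<Longrightarrow> cls (tact S s a) \<in> carrier T"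
  by (simp add: cls_closed tact_tfree)

lemma cls_tact_add:
  assumes "a \<in> TF" "b \<in> TF" "s \<in> carrier S"
  shows "cls (tact S s (fadd a b)) = cls (tact S s a) \<oplus>\<^bsub>T\<^esub> cls (tact S s b)"
  using assms by (simp add: tact_fadd T_add tact_tfree)

lemma T_lmodule: "lmodule S T"
proof -
  interpret T: abelian_group T by (rule T_abelian)
  show ?thesis
  proof (rule lmodule.intro[OF S.ring_axioms T_abelian], rule lmodule_axioms.intro)
    fix s x assume s: "s \<in> carrier S" and x: "x \<in> carrier T"
    then show "smult T s x \<in> carrier T"
      by (elim T_cases) (simp add: T_smult cls_tact_closed)
  next
    fix s s' x assume s: "s \<in> carrier S" and s': "s' \<in> carrier S" and x: "x \<in> carrier T"
    obtain a where a: "a \<in> TF" "x = cls a" using x by (elim T_cases)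
    have ss: "s \<oplus>\<^bsub>S\<^esub> s' \<in> carrier S" using s s' by simp
    have "cls (tact S (s \<oplus>\<^bsub>S\<^esub> s') a) = cls (tact S s a) \<oplus>\<^bsub>T\<^esub> cls (tact S s' a)"
    proof (rule tfree_additive_eq[where La="\<lambda>c. cls (tact S (s \<oplus>\<^bsub>S\<^esub> s') c)"
          and Lb="\<lambda>c. cls (tact S s c) \<oplus>\<^bsub>T\<^esub> cls (tact S s' c)", OF T_abelian _ _ _ _ _ a(1)])
      show "\<And>c. c \<in> TF \<Longrightarrow> cls (tact S (s \<oplus>\<^bsub>S\<^esub> s') c) \<in> carrier T"
        using ss by (simp add: cls_tact_closed)
      show "\<And>c. c \<in> TF \<Longrightarrow> cls (tact S s c) \<oplus>\<^bsub>T\<^esub> cls (tact S s' c) \<in> carrier T"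
        using s s' by (simp add: cls_tact_closed)
      show "\<And>a b. a \<in> TF \<Longrightarrow> b \<in> TF \<Longrightarrow>
        cls (tact S (s \<oplus>\<^bsub>S\<^esub> s') (fadd a b)) = cls (tact S (s \<oplus>\<^bsub>S\<^esub> s') a) \<oplus>\<^bsub>T\<^esub> cls (tact S (s \<oplus>\<^bsub>S\<^esub> s') b)"
        using ss by (simp add: cls_tact_add)
      show "\<And>a b. a \<in> TF \<Longrightarrow> b \<in> TF \<Longrightarrow>
        cls (tact S s (fadd a b)) \<oplus>\<^bsub>T\<^esub> cls (tact S s' (fadd a b)) =
        (cls (tact S s a) \<oplus>\<^bsub>T\<^esub> cls (tact S s' a)) \<oplus>\<^bsub>T\<^esub> (cls (tact S s b) \<oplus>\<^bsub>T\<^esub> cls (tact S s' b))"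
        using s s' by (simp add: cls_tact_add cls_tact_closed T.a_ac)
      fix p assume p: "p \<in> carrier S \<times> carrier W"
      obtain u w where uw: "p = (u, w)" by (cases p)
      have u: "u \<in> carrier S" "w \<in> carrier W" using p uw by auto
      show "cls (tact S (s \<oplus>\<^bsub>S\<^esub> s') (tdelta p)) = cls (tact S s (tdelta p)) \<oplus>\<^bsub>T\<^esub> cls (tact S s' (tdelta p))"
        using tau_add1[of "s \<otimes>\<^bsub>S\<^esub> u" "s' \<otimes>\<^bsub>S\<^esub> u" w] u s s'
        by (simp add: uw tact_delta tau_def S.l_distr)
    qed
    then show "smult T (s \<oplus>\<^bsub>S\<^esub> s') x = smult T s x \<oplus>\<^bsub>T\<^esub> smult T s' x"
      using a s s' ss by (simp add: T_smult)
  next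
    fix s x y assume s: "s \<in> carrier S" and x: "x \<in> carrier T" and y: "y \<in> carrier T"
    obtain a where a: "a \<in> TF" "x = cls a" using x by (elim T_cases)
    obtain b where b: "b \<in> TF" "y = cls b" using y by (elim T_cases)
    show "smult T s (x \<oplus>\<^bsub>T\<^esub> y) = smult T s x \<oplus>\<^bsub>T\<^esub> smult T s y"
      using a b s by (simp add: T_add T_smult tfree_fadd cls_tact_add)
  next
    fix s s' x assume s: "s \<in> carrier S" and s': "s' \<in> carrier S" and x: "x \<in> carrier T"
    obtain a where a: "a \<in> TF" "x = cls a" using x by (elim T_cases)
    have ss: "s \<otimes>\<^bsub>S\<^esub> s' \<in> carrier S" using s s' by simp
    have "cls (tact S (s \<otimes>\<^bsub>S\<^esub> s') a) = cls (tact S s (tact S s' a))"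
    proof (rule tfree_additive_eq[where La="\<lambda>c. cls (tact S (s \<otimes>\<^bsub>S\<^esub> s') c)"
          and Lb="\<lambda>c. cls (tact S s (tact S s' c))", OF T_abelian _ _ _ _ _ a(1)])
      show "\<And>c. c \<in> TF \<Longrightarrow> cls (tact S (s \<otimes>\<^bsub>S\<^esub> s') c) \<in> carrier T"
        using ss by (simp add: cls_tact_closed)
      show "\<And>c. c \<in> TF \<Longrightarrow> cls (tact S s (tact S s' c)) \<in> carrier T"
        using s s' by (simp add: cls_tact_closed tact_tfree)
      show "\<And>a b. a \<in> TF \<Longrightarrow> b \<in> TF \<Longrightarrow>
        cls (tact S (s \<otimes>\<^bsub>S\<^esub> s') (fadd a b)) = cls (tact S (s \<otimes>\<^bsub>S\<^esub> s') a) \<oplus>\<^bsub>T\<^esub> cls (tact S (s \<otimes>\<^bsub>S\<^esub> s') b)"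
        using ss by (simp add: cls_tact_add)
      show "\<And>a b. a \<in> TF \<Longrightarrow> b \<in> TF \<Longrightarrow>
        cls (tact S s (tact S s' (fadd a b))) = cls (tact S s (tact S s' a)) \<oplus>\<^bsub>T\<^esub> cls (tact S s (tact S s' b))"
      proof -
        fix a b assume ab: "a \<in> TF" "b \<in> TF"
        have "tact S s' a \<in> TF" "tact S s' b \<in> TF" using ab s' by (simp_all add: tact_tfree)
        then show "cls (tact S s (tact S s' (fadd a b))) = cls (tact S s (tact S s' a)) \<oplus>\<^bsub>T\<^esub> cls (tact S s (tact S s' b))"
          using s s' ab by (simp add: tact_fadd T_add tact_tfree)
      qed
      fix p assume p: "p \<in> carrier S \<times> carrier W"
      obtain u w where uw: "p = (u, w)" by (cases p)
      have u: "u \<in> carrier S" "w \<in> carrier W" using p uw by auto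
      show "cls (tact S (s \<otimes>\<^bsub>S\<^esub> s') (tdelta p)) = cls (tact S s (tact S s' (tdelta p)))"
        using u s s' by (simp add: uw tact_delta S.m_assoc)
    qed
    then show "smult T (s \<otimes>\<^bsub>S\<^esub> s') x = smult T s (smult T s' x)"
      using a s s' ss by (simp add: T_smult tact_tfree)
  next
    fix x assume x: "x \<in> carrier T"
    obtain a where a: "a \<in> TF" "x = cls a" using x by (elim T_cases)
    have "cls (tact S \<one>\<^bsub>S\<^esub> a) = cls a"
    proof (rule tfree_additive_eq[where La="\<lambda>c. cls (tact S \<one>\<^bsub>S\<^esub> c)"
          and Lb="\<lambda>c. cls c", OF T_abelian _ _ _ _ _ a(1)])
      show "\<And>c. c \<in> TF \<Longrightarrow> cls (tact S \<one>\<^bsub>S\<^esub> c) \<in> carrier T"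
        by (simp add: cls_tact_closed)
      show "\<And>c. c \<in> TF \<Longrightarrow> cls c \<in> carrier T" by (simp add: cls_closed)
      show "\<And>a b. a \<in> TF \<Longrightarrow> b \<in> TF \<Longrightarrow>
        cls (tact S \<one>\<^bsub>S\<^esub> (fadd a b)) = cls (tact S \<one>\<^bsub>S\<^esub> a) \<oplus>\<^bsub>T\<^esub> cls (tact S \<one>\<^bsub>S\<^esub> b)"
        by (simp add: cls_tact_add)
      show "\<And>a b. a \<in> TF \<Longrightarrow> b \<in> TF \<Longrightarrow> cls (fadd a b) = cls a \<oplus>\<^bsub>T\<^esub> cls b"
        by (simp add: T_add)
      fix p assume p: "p \<in> carrier S \<times> carrier W"
      obtain u w where uw: "p = (u, w)" by (cases p)
      have u: "u \<in> carrier S" "w \<in> carrier W" using p uw by auto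
      show "cls (tact S \<one>\<^bsub>S\<^esub> (tdelta p)) = cls (tdelta p)"
        using u by (simp add: uw tact_delta)
    qed
    then show "smult T \<one>\<^bsub>S\<^esub> x = x" using a by (simp add: T_smult)
  qed
qed

end

section \<open>Maps out of the tensor product\<close>

locale extl = tens R W S l + G: abelian_group G
  for R :: "('r,'c) ring_scheme" and W :: "('r,'w,'x) module_scheme" and S :: "('s,'d) ring_scheme"
    and l and G :: "('g,'z) ring_scheme" +
  fixes v :: "'s \<times> 'w \<Rightarrow> 'g"
  assumes v_closed: "p \<in> carrier S \<times> carrier W \<Longrightarrow> v p \<in> carrier G"
    and v1: "s \<in> carrier S \<Longrightarrow> s' \<in> carrier S \<Longrightarrow> w \<in> carrier W \<Longrightarrow>
      v (s \<oplus>\<^bsub>S\<^esub> s', w) = v (s, w) \<oplus>\<^bsub>G\<^esub> v (s', w)"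
    and v2: "s \<in> carrier S \<Longrightarrow> w \<in> carrier W \<Longrightarrow> w' \<in> carrier W \<Longrightarrow>
      v (s, w \<oplus>\<^bsub>W\<^esub> w') = v (s, w) \<oplus>\<^bsub>G\<^esub> v (s, w')"
    and v3: "s \<in> carrier S \<Longrightarrow> r \<in> carrier R \<Longrightarrow> w \<in> carrier W \<Longrightarrow>
      v (s \<otimes>\<^bsub>S\<^esub> l r, w) = v (s, smult W r w)"
begin

definition ext :: "('s \<times> 'w \<Rightarrow> int) \<Rightarrow> 'g" where
  "ext c = finsum G (\<lambda>p. add_pow G (c p) (v p)) {p. c p \<noteq> 0}"

definition Phi :: "('s \<times> 'w \<Rightarrow> int) set \<Rightarrow> 'g" where
  "Phi A = ext (SOME c. c \<in> TF \<and> A = cls c)"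

lemma ext_superset:
  assumes "finite F" "{p. c p \<noteq> 0} \<subseteq> F" "F \<subseteq> carrier S \<times> carrier W"
  shows "ext c = finsum G (\<lambda>p. add_pow G (c p) (v p)) F"
  unfolding ext_def
proof (rule G.add.finprod_mono_neutral_cong_left[OF assms(1,2)])
  show "\<And>i. i \<in> F - {p. c p \<noteq> 0} \<Longrightarrow> add_pow G (c i) (v i) = \<zero>\<^bsub>G\<^esub>"
    using assms(3) v_closed by (auto simp: add_pow_def)
  show "(\<lambda>p. add_pow G (c p) (v p)) \<in> F \<rightarrow> carrier G"
    using assms(3) v_closed by (auto intro!: G.add.int_pow_closed)
qed simp

lemma ext_closed: "c \<in> TF \<Longrightarrow> ext c \<in> carrier G"
  unfolding ext_def
proof (rule G.finsum_closed, rule funcsetI)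
  fix p assume c: "c \<in> TF" and "p \<in> {p. c p \<noteq> 0}"
  then have "p \<in> carrier S \<times> carrier W" using tfree_sub[OF c] by simp
  then show "add_pow G (c p) (v p) \<in> carrier G" by (intro G.add.int_pow_closed v_closed)
qed

lemma ext_fadd:
  assumes a: "a \<in> TF" and b: "b \<in> TF"
  shows "ext (fadd a b) = ext a \<oplus>\<^bsub>G\<^esub> ext b"
proof -
  define F where "F = {p. a p \<noteq> 0} \<union> {p. b p \<noteq> 0}"
  have F: "finite F" "F \<subseteq> carrier S \<times> carrier W"
    using tfree_finite[OF a] tfree_finite[OF b] tfree_sub[OF a] tfree_sub[OF b] by (auto simp: F_def)
  have vc: "\<And>p. p \<in> F \<Longrightarrow> v p \<in> carrier G" using F(2) v_closed by auto
  have "ext (fadd a b) = finsum G (\<lambda>p. add_pow G (fadd a b p) (v p)) F"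
    by (rule ext_superset[OF F(1) _ F(2)]) (auto simp: F_def fsimps)
  also have "\<dots> = finsum G (\<lambda>p. add_pow G (a p) (v p) \<oplus>\<^bsub>G\<^esub> add_pow G (b p) (v p)) F"
    by (rule G.add.finprod_cong') (auto simp: fsimps vc G.add.int_pow_mult)
  also have "\<dots> = finsum G (\<lambda>p. add_pow G (a p) (v p)) F \<oplus>\<^bsub>G\<^esub> finsum G (\<lambda>p. add_pow G (b p) (v p)) F"
    by (rule G.finsum_addf) (auto intro!: G.add.int_pow_closed vc)
  also have "\<dots> = ext a \<oplus>\<^bsub>G\<^esub> ext b"
    using ext_superset[OF F(1) _ F(2), of a] ext_superset[OF F(1) _ F(2), of b] by (auto simp: F_def)
  finally show ?thesis .
qed

lemma ext_zero: "ext (\<lambda>_. 0) = \<zero>\<^bsub>G\<^esub>"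
  by (simp add: ext_def)

lemma ext_delta:
  assumes p: "p \<in> carrier S \<times> carrier W"
  shows "ext (tdelta p) = v p"
proof -
  have "{q. tdelta p q \<noteq> 0} = {p}" by (auto simp: tdelta_def)
  then have "ext (tdelta p) = finsum G (\<lambda>q. add_pow G (tdelta p q) (v q)) {p}" by (simp add: ext_def)
  also have "\<dots> = add_pow G (tdelta p p) (v p)"
    using v_closed[OF p] by (simp add: G.add.int_pow_closed)
  also have "\<dots> = v p" using v_closed[OF p] by (simp add: tdelta_def)
  finally show ?thesis .
qed

lemma ext_fneg:
  assumes a: "a \<in> TF" shows "ext (fneg a) = \<ominus>\<^bsub>G\<^esub> ext a"
proof -
  have "fadd (fneg a) a = (\<lambda>_. 0)" by (simp add: fun_eq_iff fsimps)
  then have "ext (fneg a) \<oplus>\<^bsub>G\<^esub> ext a = \<zero>\<^bsub>G\<^esub>"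
    using ext_fadd[OF tfree_fneg[OF a] a] ext_zero by simp
  then show ?thesis using ext_closed[OF a] ext_closed[OF tfree_fneg[OF a]] by (metis G.add.inv_equality)
qed

lemma ext_fdiff:
  assumes a: "a \<in> TF" and b: "b \<in> TF" shows "ext (fdiff a b) = ext a \<ominus>\<^bsub>G\<^esub> ext b"
  using ext_fadd[OF a tfree_fneg[OF b]] ext_fneg[OF b] by (simp add: fdiff_fadd G.minus_eq)

lemma ext_trel: "c \<in> TR \<Longrightarrow> ext c = \<zero>\<^bsub>G\<^esub>"
proof -
  let ?H = "{c \<in> TF. ext c = \<zero>\<^bsub>G\<^esub>}"
  have dl: "tdelta p \<in> TF" if "p \<in> carrier S \<times> carrier W" for p using tfree_delta[OF that] .
  have "TR \<subseteq> ?H"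
  proof (rule trel_min)
    show "tgens R S l W \<subseteq> ?H"
    proof
      fix g assume gg: "g \<in> tgens R S l W"
      then have gT: "g \<in> TF" using gens_tfree by auto
      from gg consider
          (a) s1 s2 w where "s1 \<in> carrier S" "s2 \<in> carrier S" "w \<in> carrier W"
             "g = fdiff (fdiff (tdelta (s1 \<oplus>\<^bsub>S\<^esub> s2, w)) (tdelta (s1, w))) (tdelta (s2, w))"
        | (b) s1 w w' where "s1 \<in> carrier S" "w \<in> carrier W" "w' \<in> carrier W"
             "g = fdiff (fdiff (tdelta (s1, w \<oplus>\<^bsub>W\<^esub> w')) (tdelta (s1, w))) (tdelta (s1, w'))"
        | (c) s1 r w where "s1 \<in> carrier S" "r \<in> carrier R" "w \<in> carrier W"
             "g = fdiff (tdelta (s1 \<otimes>\<^bsub>S\<^esub> l r, w)) (tdelta (s1, smult W r w))"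
        using gg unfolding tgens_def by (elim UnE CollectE exE conjE) (rule that; assumption)+
      then have "ext g = \<zero>\<^bsub>G\<^esub>"
      proof cases
        case a
        have c: "v (s1, w) \<in> carrier G" "v (s2, w) \<in> carrier G" using a v_closed by auto
        have "ext g = (v (s1, w) \<oplus>\<^bsub>G\<^esub> v (s2, w)) \<ominus>\<^bsub>G\<^esub> v (s1, w) \<ominus>\<^bsub>G\<^esub> v (s2, w)"
          using a by (simp add: ext_fdiff dl tfree_fdiff ext_delta v1)
        also have "\<dots> = \<zero>\<^bsub>G\<^esub>" using c
          by (rule G.cancel3)
        finally show ?thesis .
      next
        case b
        have c: "v (s1, w) \<in> carrier G" "v (s1, w') \<in> carrier G" using b v_closed by auto
        have "ext g = (v (s1, w) \<oplus>\<^bsub>G\<^esub> v (s1, w')) \<ominus>\<^bsub>G\<^esub> v (s1, w) \<ominus>\<^bsub>G\<^esub> v (s1, w')"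
          using b by (simp add: ext_fdiff dl tfree_fdiff ext_delta v2)
        also have "\<dots> = \<zero>\<^bsub>G\<^esub>" using c
          by (rule G.cancel3)
        finally show ?thesis .
      next
        case c
        have "ext g = v (s1, smult W r w) \<ominus>\<^bsub>G\<^esub> v (s1, smult W r w)"
          using c by (simp add: ext_fdiff dl tfree_fdiff ext_delta v3 lc W.lsmult_closed)
        also have "\<dots> = \<zero>\<^bsub>G\<^esub>" using c v_closed W.lsmult_closed
          by (simp add: G.minus_eq G.r_neg)
        finally show ?thesis .
      qed
      then show "g \<in> ?H" using gT by simp
    qed
    show "?H \<subseteq> TF" by auto
    show "(\<lambda>_. 0) \<in> ?H" using tfree_zero ext_zero by simp
    show "\<forall>x\<in>?H. \<forall>y\<in>?H. fdiff x y \<in> ?H"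
      by (auto simp: ext_fdiff tfree_fdiff G.minus_eq)
  qed
  then show "c \<in> TR \<Longrightarrow> ext c = \<zero>\<^bsub>G\<^esub>" by auto
qed

lemma Phi_cls:
  assumes c: "c \<in> TF" shows "Phi (cls c) = ext c"
proof -
  define c' where "c' = (SOME c'. c' \<in> TF \<and> cls c = cls c')"
  have "\<exists>c'. c' \<in> TF \<and> cls c = cls c'" using c by blast
  then have c': "c' \<in> TF" "cls c = cls c'" unfolding c'_def by (metis (mono_tags, lifting) someI_ex)+
  then have "fdiff c' c \<in> TR" using cls_eq_iff[OF c' (1) c] by simp
  then have "ext c' \<ominus>\<^bsub>G\<^esub> ext c = \<zero>\<^bsub>G\<^esub>" using ext_trel ext_fdiff[OF c'(1) c] by simp
  then have "ext c' = ext c" using G.ag_minus_zero ext_closed c c'(1) by blast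
  then show ?thesis unfolding Phi_def c'_def[symmetric] .
qed

lemma Phi_closed: "A \<in> carrier T \<Longrightarrow> Phi A \<in> carrier G"
  by (elim T_cases) (simp add: Phi_cls ext_closed)

lemma Phi_add: "A \<in> carrier T \<Longrightarrow> B \<in> carrier T \<Longrightarrow> Phi (A \<oplus>\<^bsub>T\<^esub> B) = Phi A \<oplus>\<^bsub>G\<^esub> Phi B"
  by (elim T_cases) (simp add: Phi_cls T_add tfree_fadd ext_fadd)

lemma Phi_tau: "s \<in> carrier S \<Longrightarrow> w \<in> carrier W \<Longrightarrow> Phi (tau s w) = v (s, w)"
  unfolding tau_def by (simp add: Phi_cls tfree_delta ext_delta)

end


primrec sumk :: "('a, 'b) ring_scheme \<Rightarrow> (nat \<Rightarrow> 'a) \<Rightarrow> nat \<Rightarrow> 'a" where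
  "sumk G f 0 = \<zero>\<^bsub>G\<^esub>"
| "sumk G f (Suc k) = sumk G f k \<oplus>\<^bsub>G\<^esub> f k"

lemma sumk_cong: "(\<And>j. j < k \<Longrightarrow> f j = g j) \<Longrightarrow> sumk G f k = sumk G g k"
  by (induction k) auto

context abelian_group
begin

lemma sumk_closed: "(\<And>j. j < k \<Longrightarrow> f j \<in> carrier G) \<Longrightarrow> sumk G f k \<in> carrier G"
  by (induction k) auto

lemma sumk_add:
  "(\<And>j. j < k \<Longrightarrow> f j \<in> carrier G) \<Longrightarrow> (\<And>j. j < k \<Longrightarrow> g j \<in> carrier G) \<Longrightarrow>
   sumk G (\<lambda>j. f j \<oplus> g j) k = sumk G f k \<oplus> sumk G g k"
proof (induction k)
  case 0 then show ?case by simp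
next
  case (Suc k)
  have c: "sumk G f k \<in> carrier G" "sumk G g k \<in> carrier G" "f k \<in> carrier G" "g k \<in> carrier G"
    using Suc.prems by (auto intro!: sumk_closed)
  show ?case using Suc by (simp add: c a_ac)
qed

end

lemma sumk_hom:
  assumes "abelian_group G" "abelian_group H"
    and "\<And>j. j < k \<Longrightarrow> f j \<in> carrier G"
    and "\<And>x y. x \<in> carrier G \<Longrightarrow> y \<in> carrier G \<Longrightarrow> h (x \<oplus>\<^bsub>G\<^esub> y) = h x \<oplus>\<^bsub>H\<^esub> h y"
    and "h \<zero>\<^bsub>G\<^esub> = \<zero>\<^bsub>H\<^esub>"
  shows "h (sumk G f k) = sumk H (\<lambda>j. h (f j)) k"
  using assms(3)
proof (induction k)
  case 0 then show ?case using assms(5) by simp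
next
  case (Suc k)
  have "sumk G f k \<in> carrier G" using abelian_group.sumk_closed[OF assms(1)] Suc.prems by auto
  then show ?case using Suc assms(4) by simp
qed

lemma (in lmodule) sumk_smult:
  "a \<in> carrier A \<Longrightarrow> (\<And>j. j < k \<Longrightarrow> f j \<in> carrier M) \<Longrightarrow>
   smult M a (sumk M f k) = sumk M (\<lambda>j. smult M a (f j)) k"
proof (induction k)
  case 0 then show ?case by (simp add: smult_zero_right)
next
  case (Suc k)
  have "sumk M f k \<in> carrier M" using Suc.prems by (auto intro!: M.sumk_closed)
  then show ?case using Suc by (simp add: lsmult_r_distr)
qed

lemma sumk_submod:
  "submod A M N \<Longrightarrow> (\<And>j. j < k \<Longrightarrow> f j \<in> N) \<Longrightarrow> sumk M f k \<in> N"
  by (induction k) (auto simp: submod_def)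

lemma sumk_pow_bimod: "sumk (pow_bimod V n) f k = (\<lambda>i. sumk V (\<lambda>j. f j i) k)"
  by (induction k) (auto simp: pow_bimod_def)

lemma (in abelian_group) sumk_single:
  "(\<And>j. j < k \<Longrightarrow> x j \<in> carrier G) \<Longrightarrow> sumk G (\<lambda>j. if i = j then x j else \<zero>) k = (if i < k then x i else \<zero>)"
proof (induction k)
  case 0 then show ?case by simp
next
  case (Suc k)
  have c: "x k \<in> carrier G" using Suc.prems by simp
  have ih: "sumk G (\<lambda>j. if i = j then x j else \<zero>) k = (if i < k then x i else \<zero>)" using Suc by simp
  show ?case using c Suc.prems by (auto simp: ih)
qed



section \<open>Data from central projectivity\<close>

lemma abelian_RRR: "ring R \<Longrightarrow> abelian_group (RRR R)"
proof -
  assume R: "ring R"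
  interpret R: ring R by fact
  show ?thesis by (rule abelian_groupI) (auto simp: RRR_def R.a_ac intro: R.l_neg)
qed

lemma lmodule_RRR: "ring R \<Longrightarrow> lmodule R (RRR R)"
proof -
  assume R: "ring R"
  interpret R: ring R by fact
  show ?thesis
    by (rule lmodule.intro[OF R abelian_RRR[OF R]], rule lmodule_axioms.intro)
      (auto simp: RRR_def R.l_distr R.r_distr R.m_assoc)
qed

lemma lmodule_powRRR: "ring R \<Longrightarrow> lmodule R (pow_bimod (RRR R) k)"
  by (rule lmodule_pow_like[OF lmodule_RRR]) (auto simp: pow_bimod_def RRR_def)

lemma abelian_RSR: "ring S \<Longrightarrow> abelian_group (RSR l S)"
proof -
  assume S: "ring S"
  interpret S: ring S by fact
  show ?thesis by (rule abelian_groupI) (auto simp: RSR_def S.a_ac intro: S.l_neg)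
qed

lemma sumk_RRR: "sumk (RRR R) f k = sumk R f k"
  by (induction k) (simp_all add: RRR_def)

lemma cp_data:
  assumes R: "ring R" and S: "ring S" and hom: "l \<in> ring_hom R S" and cp: "centrally_projective R S l"
  obtains k phi sj where
    "\<And>j s. j < k \<Longrightarrow> s \<in> carrier S \<Longrightarrow> phi j s \<in> carrier R"
    "\<And>j s s'. j < k \<Longrightarrow> s \<in> carrier S \<Longrightarrow> s' \<in> carrier S \<Longrightarrow> phi j (s \<oplus>\<^bsub>S\<^esub> s') = phi j s \<oplus>\<^bsub>R\<^esub> phi j s'"
    "\<And>j r s. j < k \<Longrightarrow> r \<in> carrier R \<Longrightarrow> s \<in> carrier S \<Longrightarrow> phi j (l r \<otimes>\<^bsub>S\<^esub> s) = r \<otimes>\<^bsub>R\<^esub> phi j s"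
    "\<And>j r s. j < k \<Longrightarrow> r \<in> carrier R \<Longrightarrow> s \<in> carrier S \<Longrightarrow> phi j (s \<otimes>\<^bsub>S\<^esub> l r) = phi j s \<otimes>\<^bsub>R\<^esub> r"
    "\<And>j. j < k \<Longrightarrow> sj j \<in> carrier S"
    "\<And>j r. j < k \<Longrightarrow> r \<in> carrier R \<Longrightarrow> sj j \<otimes>\<^bsub>S\<^esub> l r = l r \<otimes>\<^bsub>S\<^esub> sj j"
    "\<And>s. s \<in> carrier S \<Longrightarrow> s = sumk S (\<lambda>j. sj j \<otimes>\<^bsub>S\<^esub> l (phi j s)) k"
proof -
  interpret R: ring R by fact
  interpret S: ring S by fact
  have lc: "\<And>r. r \<in> carrier R \<Longrightarrow> l r \<in> carrier S" using hom by (simp add: ring_hom_closed)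
  obtain k P P' h where Pb: "subbimod R R (pow_bimod (RRR R) k) P"
    and P'b: "subbimod R R (pow_bimod (RRR R) k) P'"
    and int: "P \<inter> P' = {\<zero>\<^bsub>pow_bimod (RRR R) k\<^esub>}"
    and dec: "\<forall>x\<in>carrier (pow_bimod (RRR R) k). \<exists>y\<in>P. \<exists>z\<in>P'. x = y \<oplus>\<^bsub>pow_bimod (RRR R) k\<^esub> z"
    and bl: "bilin_map R R (RSR l S) ((pow_bimod (RRR R) k)\<lparr>carrier := P\<rparr>) h"
    and hb: "bij_betw h (carrier S) P"
    using cp unfolding centrally_projective_def in_add_bi_def bimod_iso_def
    by (elim exE conjE) (rule that; simp add: RSR_def)
  define Xm where "Xm = pow_bimod (RRR R) k"
  interpret Xm: lmodule R Xm unfolding Xm_def by (rule lmodule_powRRR[OF R])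
  have P: "submod R Xm P" and P': "submod R Xm P'" using Pb P'b by (auto simp: subbimod_def Xm_def)
  have Prs: "\<And>b x. b \<in> carrier R \<Longrightarrow> x \<in> P \<Longrightarrow> rsmult Xm x b \<in> P"
    and P'rs: "\<And>b x. b \<in> carrier R \<Longrightarrow> x \<in> P' \<Longrightarrow> rsmult Xm x b \<in> P'"
    using Pb P'b by (auto simp: subbimod_def Xm_def)
  have sP: "P \<subseteq> carrier Xm" and sP': "P' \<subseteq> carrier Xm" using P P' by (auto simp: submod_def)
  have int': "P \<inter> P' = {\<zero>\<^bsub>Xm\<^esub>}" using int by (simp add: Xm_def)
  have Xc: "\<And>x i. x \<in> carrier Xm \<Longrightarrow> x i \<in> carrier R"
    by (auto simp: Xm_def pow_bimod_def RRR_def) (metis R.zero_closed not_le)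
  have Xc2: "\<And>x i. x \<in> carrier Xm \<Longrightarrow> i \<ge> k \<Longrightarrow> x i = \<zero>\<^bsub>R\<^esub>"
    by (auto simp: Xm_def pow_bimod_def RRR_def)
  have Xadd: "\<And>x y. x \<oplus>\<^bsub>Xm\<^esub> y = (\<lambda>i. x i \<oplus>\<^bsub>R\<^esub> y i)" by (simp add: Xm_def pow_bimod_def RRR_def)
  have Xsm: "\<And>r x. smult Xm r x = (\<lambda>i. r \<otimes>\<^bsub>R\<^esub> x i)" by (simp add: Xm_def pow_bimod_def RRR_def)
  have Xrs: "\<And>r x. rsmult Xm x r = (\<lambda>i. x i \<otimes>\<^bsub>R\<^esub> r)" by (simp add: Xm_def pow_bimod_def RRR_def)
  have hl: "lin_map R (RSR l S) Xm h" using bl sP unfolding bilin_map_def lin_map_def Xm_def by (auto simp: Pi_def)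
  have hrs: "\<And>r s. r \<in> carrier R \<Longrightarrow> s \<in> carrier S \<Longrightarrow> h (s \<otimes>\<^bsub>S\<^esub> l r) = rsmult Xm (h s) r"
    using bl unfolding bilin_map_def Xm_def by (auto simp: RSR_def)
  have hadd: "\<And>s s'. s \<in> carrier S \<Longrightarrow> s' \<in> carrier S \<Longrightarrow> h (s \<oplus>\<^bsub>S\<^esub> s') = h s \<oplus>\<^bsub>Xm\<^esub> h s'"
    using lin_map_add[OF hl] by (simp add: RSR_def)
  have hsm: "\<And>r s. r \<in> carrier R \<Longrightarrow> s \<in> carrier S \<Longrightarrow> h (l r \<otimes>\<^bsub>S\<^esub> s) = smult Xm r (h s)"
    using lin_map_smult[OF hl] by (simp add: RSR_def)
  have h0: "h \<zero>\<^bsub>S\<^esub> = \<zero>\<^bsub>Xm\<^esub>"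
    using lin_map_zero[OF abelian_RSR[OF S] Xm.abelian_group_axioms hl] by (simp add: RSR_def)
  have hP: "\<And>s. s \<in> carrier S \<Longrightarrow> h s \<in> P" using hb by (auto simp: bij_betw_def)
  have hX: "\<And>s. s \<in> carrier S \<Longrightarrow> h s \<in> carrier Xm" using hP sP by auto
  have hinj: "\<And>s s'. s \<in> carrier S \<Longrightarrow> s' \<in> carrier S \<Longrightarrow> h s = h s' \<Longrightarrow> s = s'"
    using hb by (auto simp: bij_betw_def inj_on_def)
  define phi where "phi = (\<lambda>j s. h s j)"
  define e where "e = (\<lambda>j::nat. \<lambda>i::nat. if i = j then \<one>\<^bsub>R\<^esub> else \<zero>\<^bsub>R\<^esub>)"
  have ec: "\<And>j. j < k \<Longrightarrow> e j \<in> carrier Xm" by (auto simp: e_def Xm_def pow_bimod_def RRR_def)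
  have "\<forall>j. \<exists>yz. j < k \<longrightarrow> fst yz \<in> P \<and> snd yz \<in> P' \<and> e j = fst yz \<oplus>\<^bsub>Xm\<^esub> snd yz"
  proof (intro allI)
    fix j show "\<exists>yz. j < k \<longrightarrow> fst yz \<in> P \<and> snd yz \<in> P' \<and> e j = fst yz \<oplus>\<^bsub>Xm\<^esub> snd yz"
    proof (cases "j < k")
      case True
      obtain y z where "y \<in> P" "z \<in> P'" "e j = y \<oplus>\<^bsub>Xm\<^esub> z"
        using bspec[OF dec ec[OF True, unfolded Xm_def]] unfolding Xm_def by blast
      then show ?thesis by (intro exI[of _ "(y, z)"]) simp
    qed simp
  qed
  then obtain pq where pq: "\<And>j. j < k \<Longrightarrow> fst (pq j) \<in> P \<and> snd (pq j) \<in> P' \<and> e j = fst (pq j) \<oplus>\<^bsub>Xm\<^esub> snd (pq j)"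
    by (metis choice)
  define pj where "pj = (\<lambda>j. fst (pq j))"
  define qj where "qj = (\<lambda>j. snd (pq j))"
  have pjP: "\<And>j. j < k \<Longrightarrow> pj j \<in> P" and qjP: "\<And>j. j < k \<Longrightarrow> qj j \<in> P'"
    and epq: "\<And>j. j < k \<Longrightarrow> e j = pj j \<oplus>\<^bsub>Xm\<^esub> qj j" using pq by (auto simp: pj_def qj_def)
  have pjX: "\<And>j. j < k \<Longrightarrow> pj j \<in> carrier Xm" and qjX: "\<And>j. j < k \<Longrightarrow> qj j \<in> carrier Xm"
    using pjP qjP sP sP' by auto
  define sj where "sj = (\<lambda>j. inv_into (carrier S) h (pj j))"
  have sjS: "\<And>j. j < k \<Longrightarrow> sj j \<in> carrier S" and hsj: "\<And>j. j < k \<Longrightarrow> h (sj j) = pj j"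
    using hb pjP unfolding sj_def bij_betw_def by (auto intro: inv_into_into f_inv_into_f)
  have phiR: "\<And>j s. j < k \<Longrightarrow> s \<in> carrier S \<Longrightarrow> phi j s \<in> carrier R"
    unfolding phi_def using hX Xc by blast
  have Xabel: "abelian_group Xm" by (rule Xm.abelian_group_axioms)
  have K1: "s = sumk S (\<lambda>j. l (phi j s) \<otimes>\<^bsub>S\<^esub> sj j) k" if s: "s \<in> carrier S" for s
  proof -
    define a where "a = sumk Xm (\<lambda>j. smult Xm (phi j s) (pj j)) k"
    define b where "b = sumk Xm (\<lambda>j. smult Xm (phi j s) (qj j)) k"
    have aP: "a \<in> P" unfolding a_def
      by (rule sumk_submod[OF P]) (use P pjP phiR s in \<open>auto simp: submod_def\<close>)
    have bP': "b \<in> P'" unfolding b_def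
      by (rule sumk_submod[OF P']) (use P' qjP phiR s in \<open>auto simp: submod_def\<close>)
    have aX: "a \<in> carrier Xm" and bX: "b \<in> carrier Xm" using aP bP' sP sP' by auto
    have "a \<oplus>\<^bsub>Xm\<^esub> b = sumk Xm (\<lambda>j. smult Xm (phi j s) (pj j) \<oplus>\<^bsub>Xm\<^esub> smult Xm (phi j s) (qj j)) k"
      unfolding a_def b_def
      by (rule Xm.sumk_add[symmetric]) (auto intro!: Xm.lsmult_closed phiR s pjX qjX)
    also have "\<dots> = sumk Xm (\<lambda>j. smult Xm (phi j s) (e j)) k"
      by (rule sumk_cong) (simp add: epq Xm.lsmult_r_distr phiR s pjX qjX)
    also have "\<dots> = h s"
    proof (rule ext)
      fix i
      have "sumk Xm (\<lambda>j. smult Xm (phi j s) (e j)) k i = sumk R (\<lambda>j. phi j s \<otimes>\<^bsub>R\<^esub> e j i) k"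
        unfolding Xm_def sumk_pow_bimod by (simp add: Xsm[unfolded Xm_def] sumk_RRR)
      also have "\<dots> = sumk R (\<lambda>j. if i = j then phi j s else \<zero>\<^bsub>R\<^esub>) k"
        by (rule sumk_cong) (auto simp: e_def phiR s)
      also have "\<dots> = (if i < k then phi i s else \<zero>\<^bsub>R\<^esub>)"
        by (rule R.sumk_single) (simp add: phiR s)
      also have "\<dots> = h s i" using Xc2[OF hX[OF s]] by (auto simp: phi_def)
      finally show "sumk Xm (\<lambda>j. smult Xm (phi j s) (e j)) k i = h s i" .
    qed
    finally have abh: "a \<oplus>\<^bsub>Xm\<^esub> b = h s" .
    have "h s \<ominus>\<^bsub>Xm\<^esub> a = b" unfolding abh[symmetric] using aX bX
      by (simp add: Xm.minus_eq Xm.a_comm[of a b] Xm.a_assoc Xm.r_neg)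
    then have "b \<in> P" using Xm.submod_minus[OF P hP[OF s] aP] by simp
    then have "b = \<zero>\<^bsub>Xm\<^esub>" using bP' int' by auto
    then have has: "h s = a" using abh aX by simp
    have tS: "\<And>j. j < k \<Longrightarrow> l (phi j s) \<otimes>\<^bsub>S\<^esub> sj j \<in> carrier S"
      using lc phiR s sjS by simp
    have "h (sumk S (\<lambda>j. l (phi j s) \<otimes>\<^bsub>S\<^esub> sj j) k) = sumk Xm (\<lambda>j. h (l (phi j s) \<otimes>\<^bsub>S\<^esub> sj j)) k"
      by (rule sumk_hom[OF S.abelian_group_axioms Xabel tS hadd h0])
    also have "\<dots> = a" unfolding a_def
      by (rule sumk_cong) (simp add: hsm phiR s sjS hsj)
    finally have "h (sumk S (\<lambda>j. l (phi j s) \<otimes>\<^bsub>S\<^esub> sj j) k) = h s" using has by simp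
    then show ?thesis by (intro hinj[OF s S.sumk_closed]) (auto intro: tS)
  qed
  have K2: "sj j \<otimes>\<^bsub>S\<^esub> l r = l r \<otimes>\<^bsub>S\<^esub> sj j" if j: "j < k" and r: "r \<in> carrier R" for j r
  proof -
    have p: "pj j \<in> carrier Xm" "qj j \<in> carrier Xm" using pjX qjX j by auto
    have rsX: "\<And>x. x \<in> carrier Xm \<Longrightarrow> rsmult Xm x r \<in> carrier Xm"
      using r by (auto simp: Xm_def pow_bimod_def RRR_def)
    have "rsmult Xm (e j) r = smult Xm r (e j)"
      using r by (auto simp: Xrs Xsm e_def)
    moreover have "rsmult Xm (e j) r = rsmult Xm (pj j) r \<oplus>\<^bsub>Xm\<^esub> rsmult Xm (qj j) r"
      using epq[OF j] p Xc r by (auto simp: Xrs Xadd R.l_distr)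
    moreover have "smult Xm r (e j) = smult Xm r (pj j) \<oplus>\<^bsub>Xm\<^esub> smult Xm r (qj j)"
      using epq[OF j] p r by (simp add: Xm.lsmult_r_distr)
    ultimately have "rsmult Xm (pj j) r \<oplus>\<^bsub>Xm\<^esub> rsmult Xm (qj j) r = smult Xm r (pj j) \<oplus>\<^bsub>Xm\<^esub> smult Xm r (qj j)"
      by simp
    then have eq: "rsmult Xm (pj j) r \<ominus>\<^bsub>Xm\<^esub> smult Xm r (pj j) = smult Xm r (qj j) \<ominus>\<^bsub>Xm\<^esub> rsmult Xm (qj j) r"
      using p r rsX by (intro Xm.ag_swap) (auto intro: Xm.lsmult_closed)
    have "rsmult Xm (pj j) r \<ominus>\<^bsub>Xm\<^esub> smult Xm r (pj j) \<in> P"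
      using Xm.submod_minus[OF P Prs[OF r pjP[OF j]]] P r pjP[OF j] by (auto simp: submod_def)
    moreover have "smult Xm r (qj j) \<ominus>\<^bsub>Xm\<^esub> rsmult Xm (qj j) r \<in> P'"
      using Xm.submod_minus[OF P' _ P'rs[OF r qjP[OF j]]] P' r qjP[OF j] by (auto simp: submod_def)
    ultimately have "rsmult Xm (pj j) r \<ominus>\<^bsub>Xm\<^esub> smult Xm r (pj j) \<in> P \<inter> P'" using eq by simp
    then have "rsmult Xm (pj j) r \<ominus>\<^bsub>Xm\<^esub> smult Xm r (pj j) = \<zero>\<^bsub>Xm\<^esub>" unfolding int' by simp
    moreover have "rsmult Xm (pj j) r \<in> carrier Xm" "smult Xm r (pj j) \<in> carrier Xm"
      using p r rsX Xm.lsmult_closed by auto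
    ultimately have "rsmult Xm (pj j) r = smult Xm r (pj j)" using Xm.ag_minus_zero by blast
    then have "h (sj j \<otimes>\<^bsub>S\<^esub> l r) = h (l r \<otimes>\<^bsub>S\<^esub> sj j)"
      using hrs[OF r sjS[OF j]] hsm[OF r sjS[OF j]] hsj[OF j] by simp
    then show ?thesis by (rule hinj[rotated 2]) (simp_all add: lc r sjS j)
  qed
  show ?thesis
  proof (rule that[of k phi sj])
    show "\<And>j s. j < k \<Longrightarrow> s \<in> carrier S \<Longrightarrow> phi j s \<in> carrier R" by (rule phiR)
    show "\<And>j s s'. j < k \<Longrightarrow> s \<in> carrier S \<Longrightarrow> s' \<in> carrier S \<Longrightarrow> phi j (s \<oplus>\<^bsub>S\<^esub> s') = phi j s \<oplus>\<^bsub>R\<^esub> phi j s'"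
      by (simp add: phi_def hadd Xadd)
    show "\<And>j r s. j < k \<Longrightarrow> r \<in> carrier R \<Longrightarrow> s \<in> carrier S \<Longrightarrow> phi j (l r \<otimes>\<^bsub>S\<^esub> s) = r \<otimes>\<^bsub>R\<^esub> phi j s"
      by (simp add: phi_def hsm Xsm)
    show "\<And>j r s. j < k \<Longrightarrow> r \<in> carrier R \<Longrightarrow> s \<in> carrier S \<Longrightarrow> phi j (s \<otimes>\<^bsub>S\<^esub> l r) = phi j s \<otimes>\<^bsub>R\<^esub> r"
      by (simp add: phi_def hrs Xrs)
    show "\<And>j. j < k \<Longrightarrow> sj j \<in> carrier S" by (rule sjS)
    show "\<And>j r. j < k \<Longrightarrow> r \<in> carrier R \<Longrightarrow> sj j \<otimes>\<^bsub>S\<^esub> l r = l r \<otimes>\<^bsub>S\<^esub> sj j" by (rule K2)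
    fix s assume s: "s \<in> carrier S"
    have "sumk S (\<lambda>j. sj j \<otimes>\<^bsub>S\<^esub> l (phi j s)) k = sumk S (\<lambda>j. l (phi j s) \<otimes>\<^bsub>S\<^esub> sj j) k"
      by (rule sumk_cong) (simp add: K2 phiR s)
    then show "s = sumk S (\<lambda>j. sj j \<otimes>\<^bsub>S\<^esub> l (phi j s)) k" using K1[OF s] by simp
  qed
qed


section \<open>Retraction of the tensor power onto a power of W\<close>

context tens
begin

lemma tau_zero: "w \<in> carrier W \<Longrightarrow> tau \<zero>\<^bsub>S\<^esub> w = \<zero>\<^bsub>T\<^esub>"
proof -
  assume w: "w \<in> carrier W"
  interpret T: abelian_group T by (rule T_abelian)
  have "tau \<zero>\<^bsub>S\<^esub> w \<oplus>\<^bsub>T\<^esub> tau \<zero>\<^bsub>S\<^esub> w = tau \<zero>\<^bsub>S\<^esub> w"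
    using tau_add1[of "\<zero>\<^bsub>S\<^esub>" "\<zero>\<^bsub>S\<^esub>" w] w by simp
  then show ?thesis using T.idem_zero tau_closed w by simp
qed

lemma tau_sumk:
  "w \<in> carrier W \<Longrightarrow> (\<And>j. j < k \<Longrightarrow> x j \<in> carrier S) \<Longrightarrow> sumk T (\<lambda>j. tau (x j) w) k = tau (sumk S x k) w"
proof (induction k)
  case 0 then show ?case by (simp add: tau_zero)
next
  case (Suc k)
  have "sumk S x k \<in> carrier S" using Suc.prems by (auto intro!: S.sumk_closed)
  then show ?case using Suc by (simp add: tau_add1)
qed

lemma tensor_retr:
  assumes phiR: "\<And>j s. j < k \<Longrightarrow> s \<in> carrier S \<Longrightarrow> phi j s \<in> carrier R"
    and phi_add: "\<And>j s s'. j < k \<Longrightarrow> s \<in> carrier S \<Longrightarrow> s' \<in> carrier S \<Longrightarrow> phi j (s \<oplus>\<^bsub>S\<^esub> s') = phi j s \<oplus>\<^bsub>R\<^esub> phi j s'"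
    and phi_l: "\<And>j r s. j < k \<Longrightarrow> r \<in> carrier R \<Longrightarrow> s \<in> carrier S \<Longrightarrow> phi j (l r \<otimes>\<^bsub>S\<^esub> s) = r \<otimes>\<^bsub>R\<^esub> phi j s"
    and phi_r: "\<And>j r s. j < k \<Longrightarrow> r \<in> carrier R \<Longrightarrow> s \<in> carrier S \<Longrightarrow> phi j (s \<otimes>\<^bsub>S\<^esub> l r) = phi j s \<otimes>\<^bsub>R\<^esub> r"
    and sjS: "\<And>j. j < k \<Longrightarrow> sj j \<in> carrier S"
    and sj_comm: "\<And>j r. j < k \<Longrightarrow> r \<in> carrier R \<Longrightarrow> sj j \<otimes>\<^bsub>S\<^esub> l r = l r \<otimes>\<^bsub>S\<^esub> sj j"
    and sj_dec: "\<And>s. s \<in> carrier S \<Longrightarrow> s = sumk S (\<lambda>j. sj j \<otimes>\<^bsub>S\<^esub> l (phi j s)) k"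
  shows "\<exists>F G. retr R (pow_mod (restr l T) n) (pow_mod W (n * k)) F G"
proof -
  interpret T: lmodule S T by (rule T_lmodule)
  define v where "v = (\<lambda>j (p :: 's \<times> 'w). smult W (phi j (fst p)) (snd p))"
  have E: "extl R W S l W (v j)" if j: "j < k" for j
  proof (rule extl.intro)
    show "tens R W S l" by unfold_locales
    show "abelian_group W" by (rule W.abelian_group_axioms)
    show "extl_axioms R W S l W (v j)"
    proof (rule extl_axioms.intro)
      show "\<And>p. p \<in> carrier S \<times> carrier W \<Longrightarrow> v j p \<in> carrier W"
        using j phiR by (auto simp: v_def W.lsmult_closed)
      show "\<And>s s' w. s \<in> carrier S \<Longrightarrow> s' \<in> carrier S \<Longrightarrow> w \<in> carrier W \<Longrightarrow>
          v j (s \<oplus>\<^bsub>S\<^esub> s', w) = v j (s, w) \<oplus>\<^bsub>W\<^esub> v j (s', w)"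
        using j phiR by (simp add: v_def phi_add W.lsmult_l_distr)
      show "\<And>s w w'. s \<in> carrier S \<Longrightarrow> w \<in> carrier W \<Longrightarrow> w' \<in> carrier W \<Longrightarrow>
          v j (s, w \<oplus>\<^bsub>W\<^esub> w') = v j (s, w) \<oplus>\<^bsub>W\<^esub> v j (s, w')"
        using j phiR by (simp add: v_def W.lsmult_r_distr)
      show "\<And>s r w. s \<in> carrier S \<Longrightarrow> r \<in> carrier R \<Longrightarrow> w \<in> carrier W \<Longrightarrow>
          v j (s \<otimes>\<^bsub>S\<^esub> l r, w) = v j (s, smult W r w)"
        using j phiR by (simp add: v_def phi_r W.lsmult_assoc)
    qed
  qed
  define Phi where "Phi = (\<lambda>j. extl.Phi R W S l W (v j))"
  define ext where "ext = (\<lambda>j. extl.ext W (v j))"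
  have Phi_cls: "\<And>j c. j < k \<Longrightarrow> c \<in> TF \<Longrightarrow> Phi j (cls c) = ext j c"
    unfolding Phi_def ext_def using extl.Phi_cls[OF E] by blast
  have Phi_closed: "\<And>j A. j < k \<Longrightarrow> A \<in> carrier T \<Longrightarrow> Phi j A \<in> carrier W"
    unfolding Phi_def using extl.Phi_closed[OF E] by blast
  have Phi_add: "\<And>j A B. j < k \<Longrightarrow> A \<in> carrier T \<Longrightarrow> B \<in> carrier T \<Longrightarrow> Phi j (A \<oplus>\<^bsub>T\<^esub> B) = Phi j A \<oplus>\<^bsub>W\<^esub> Phi j B"
    unfolding Phi_def using extl.Phi_add[OF E] by blast
  have ext_closed: "\<And>j c. j < k \<Longrightarrow> c \<in> TF \<Longrightarrow> ext j c \<in> carrier W"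
    unfolding ext_def using extl.ext_closed[OF E] by blast
  have ext_fadd: "\<And>j a b. j < k \<Longrightarrow> a \<in> TF \<Longrightarrow> b \<in> TF \<Longrightarrow> ext j (fadd a b) = ext j a \<oplus>\<^bsub>W\<^esub> ext j b"
    unfolding ext_def using extl.ext_fadd[OF E] by blast
  have ext_delta: "\<And>j p. j < k \<Longrightarrow> p \<in> carrier S \<times> carrier W \<Longrightarrow> ext j (tdelta p) = v j p"
    unfolding ext_def using extl.ext_delta[OF E] by blast
  have Phi_tau: "\<And>j s w. j < k \<Longrightarrow> s \<in> carrier S \<Longrightarrow> w \<in> carrier W \<Longrightarrow> Phi j (tau s w) = smult W (phi j s) w"
    unfolding Phi_def using extl.Phi_tau[OF E] by (simp add: v_def)
  have Phi_sm: "Phi j (smult T (l r) A) = smult W r (Phi j A)"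
    if j: "j < k" and r: "r \<in> carrier R" and A: "A \<in> carrier T" for j r A
  proof -
    obtain c where c: "c \<in> TF" "A = cls c" using A by (elim T_cases)
    have "ext j (tact S (l r) c) = smult W r (ext j c)"
    proof (rule tfree_additive_eq[where La="\<lambda>c. ext j (tact S (l r) c)" and Lb="\<lambda>c. smult W r (ext j c)",
          OF W.abelian_group_axioms _ _ _ _ _ c(1)])
      show "\<And>c. c \<in> TF \<Longrightarrow> ext j (tact S (l r) c) \<in> carrier W"
        using ext_closed j tact_tfree lc r by simp
      show "\<And>c. c \<in> TF \<Longrightarrow> smult W r (ext j c) \<in> carrier W"
        using ext_closed j r W.lsmult_closed by simp
      show "\<And>a b. a \<in> TF \<Longrightarrow> b \<in> TF \<Longrightarrow>
          ext j (tact S (l r) (fadd a b)) = ext j (tact S (l r) a) \<oplus>\<^bsub>W\<^esub> ext j (tact S (l r) b)"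
        using j lc[OF r] by (simp add: tact_fadd ext_fadd tact_tfree)
      show "\<And>a b. a \<in> TF \<Longrightarrow> b \<in> TF \<Longrightarrow>
          smult W r (ext j (fadd a b)) = smult W r (ext j a) \<oplus>\<^bsub>W\<^esub> smult W r (ext j b)"
        using j r by (simp add: ext_fadd ext_closed W.lsmult_r_distr)
      fix p assume p: "p \<in> carrier S \<times> carrier W"
      obtain u w where uw: "p = (u, w)" by (cases p)
      have u: "u \<in> carrier S" "w \<in> carrier W" using p uw by auto
      show "ext j (tact S (l r) (tdelta p)) = smult W r (ext j (tdelta p))"
        using u j r lc[OF r] p
        by (simp add: uw tact_delta ext_delta v_def phi_l W.lsmult_assoc phiR)
    qed
    then show ?thesis using c j r lc[OF r] by (simp add: T_smult Phi_cls tact_tfree)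
  qed
  have KEY: "sumk T (\<lambda>j. tau (sj j) (Phi j A)) k = A" if A: "A \<in> carrier T" for A
  proof -
    obtain c where c: "c \<in> TF" "A = cls c" using A by (elim T_cases)
    have "sumk T (\<lambda>j. tau (sj j) (ext j c)) k = cls c"
    proof (rule tfree_additive_eq[where La="\<lambda>c. sumk T (\<lambda>j. tau (sj j) (ext j c)) k" and Lb="\<lambda>c. cls c",
          OF T.abelian_group_axioms _ _ _ _ _ c(1)])
      show "\<And>c. c \<in> TF \<Longrightarrow> sumk T (\<lambda>j. tau (sj j) (ext j c)) k \<in> carrier T"
        by (rule T.sumk_closed) (simp add: tau_closed sjS ext_closed)
      show "\<And>c. c \<in> TF \<Longrightarrow> cls c \<in> carrier T" by (simp add: cls_closed)
      show "\<And>a b. a \<in> TF \<Longrightarrow> b \<in> TF \<Longrightarrow> cls (fadd a b) = cls a \<oplus>\<^bsub>T\<^esub> cls b"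
        by (simp add: T_add)
      show "\<And>a b. a \<in> TF \<Longrightarrow> b \<in> TF \<Longrightarrow>
          sumk T (\<lambda>j. tau (sj j) (ext j (fadd a b))) k =
          sumk T (\<lambda>j. tau (sj j) (ext j a)) k \<oplus>\<^bsub>T\<^esub> sumk T (\<lambda>j. tau (sj j) (ext j b)) k"
      proof -
        fix a b assume a: "a \<in> TF" and b: "b \<in> TF"
        have "sumk T (\<lambda>j. tau (sj j) (ext j (fadd a b))) k =
            sumk T (\<lambda>j. tau (sj j) (ext j a) \<oplus>\<^bsub>T\<^esub> tau (sj j) (ext j b)) k"
          by (rule sumk_cong) (simp add: ext_fadd a b tau_add2 sjS ext_closed)
        also have "\<dots> = sumk T (\<lambda>j. tau (sj j) (ext j a)) k \<oplus>\<^bsub>T\<^esub> sumk T (\<lambda>j. tau (sj j) (ext j b)) k"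
          by (rule T.sumk_add) (simp_all add: tau_closed sjS ext_closed a b)
        finally show "sumk T (\<lambda>j. tau (sj j) (ext j (fadd a b))) k =
          sumk T (\<lambda>j. tau (sj j) (ext j a)) k \<oplus>\<^bsub>T\<^esub> sumk T (\<lambda>j. tau (sj j) (ext j b)) k" .
      qed
      fix p assume p: "p \<in> carrier S \<times> carrier W"
      obtain u w where uw: "p = (u, w)" by (cases p)
      have u: "u \<in> carrier S" "w \<in> carrier W" using p uw by auto
      have "sumk T (\<lambda>j. tau (sj j) (ext j (tdelta p))) k = sumk T (\<lambda>j. tau (sj j \<otimes>\<^bsub>S\<^esub> l (phi j u)) w) k"
        by (rule sumk_cong) (simp add: ext_delta p uw v_def tau_l sjS u phiR)
      also have "\<dots> = tau (sumk S (\<lambda>j. sj j \<otimes>\<^bsub>S\<^esub> l (phi j u)) k) w"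
        by (rule tau_sumk) (simp_all add: u sjS lc phiR)
      also have "\<dots> = cls (tdelta p)" using sj_dec[OF u(1)] by (simp add: tau_def uw)
      finally show "sumk T (\<lambda>j. tau (sj j) (ext j (tdelta p))) k = cls (tdelta p)" .
    qed
    moreover have "sumk T (\<lambda>j. tau (sj j) (Phi j A)) k = sumk T (\<lambda>j. tau (sj j) (ext j c)) k"
      by (rule sumk_cong) (simp add: c Phi_cls)
    ultimately show ?thesis using c by simp
  qed
  define Fm where "Fm = (\<lambda>x q. if q < n * k then Phi (q mod k) (x (q div k)) else \<zero>\<^bsub>W\<^esub>)"
  define Gm where "Gm = (\<lambda>y i. if i < n then sumk T (\<lambda>j. tau (sj j) (y (i * k + j))) k else \<zero>\<^bsub>T\<^esub>)"
  have cT: "carrier (pow_mod (restr l T) n) = {f. (\<forall>i<n. f i \<in> carrier T) \<and> (\<forall>i\<ge>n. f i = \<zero>\<^bsub>T\<^esub>)}"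
    by (simp add: pow_mod_def restr_def)
  have aT: "\<And>f g. f \<oplus>\<^bsub>pow_mod (restr l T) n\<^esub> g = (\<lambda>i. f i \<oplus>\<^bsub>T\<^esub> g i)"
    by (simp add: pow_mod_def restr_def)
  have sT: "\<And>r f. smult (pow_mod (restr l T) n) r f = (\<lambda>i. smult T (l r) (f i))"
    by (simp add: pow_mod_def restr_def)
  have cW: "carrier (pow_mod W (n * k)) = {f. (\<forall>i<n * k. f i \<in> carrier W) \<and> (\<forall>i\<ge>n * k. f i = \<zero>\<^bsub>W\<^esub>)}"
    by (simp add: pow_mod_def)
  have aW: "\<And>f g. f \<oplus>\<^bsub>pow_mod W (n * k)\<^esub> g = (\<lambda>i. f i \<oplus>\<^bsub>W\<^esub> g i)"
    by (simp add: pow_mod_def)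
  have sW: "\<And>r f. smult (pow_mod W (n * k)) r f = (\<lambda>i. smult W r (f i))"
    by (simp add: pow_mod_def)
  have idx1: "i * k + j < n * k" if "i < n" "j < k" for i j
  proof -
    have "i * k + j < i * k + k" using that by simp
    also have "\<dots> = Suc i * k" by simp
    also have "\<dots> \<le> n * k" using that by (intro mult_le_mono1) simp
    finally show ?thesis .
  qed
  have idx2: "(i * k + j) div k = i" "(i * k + j) mod k = j" if "j < k" for i j
    using that by auto
  have idx3: "q div k < n" "q mod k < k" if "q < n * k" for q
    using that by (auto simp: less_mult_imp_div_less) (metis mod_less_divisor mult_0_right not_gr0 not_less0)
  have Fl: "lin_map R (pow_mod (restr l T) n) (pow_mod W (n * k)) Fm"
    unfolding lin_map_def
  proof (intro conjI ballI)
    show "Fm \<in> carrier (pow_mod (restr l T) n) \<rightarrow> carrier (pow_mod W (n * k))"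
      unfolding cT cW Fm_def using idx3 Phi_closed by auto
    fix x y assume x: "x \<in> carrier (pow_mod (restr l T) n)" and y: "y \<in> carrier (pow_mod (restr l T) n)"
    show "Fm (x \<oplus>\<^bsub>pow_mod (restr l T) n\<^esub> y) = Fm x \<oplus>\<^bsub>pow_mod W (n * k)\<^esub> Fm y"
      unfolding aT aW Fm_def using x y idx3 by (auto simp: cT Phi_add)
  next
    fix r x assume r: "r \<in> carrier R" and x: "x \<in> carrier (pow_mod (restr l T) n)"
    show "Fm (smult (pow_mod (restr l T) n) r x) = smult (pow_mod W (n * k)) r (Fm x)"
      unfolding sT sW Fm_def using x idx3 r by (auto simp: cT Phi_sm W.smult_zero_right)
  qed
  have yW: "y (i * k + j) \<in> carrier W" if "y \<in> carrier (pow_mod W (n * k))" "i < n" "j < k" for y i j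
    using that idx1 by (auto simp: cW)
  have Gl: "lin_map R (pow_mod W (n * k)) (pow_mod (restr l T) n) Gm"
    unfolding lin_map_def
  proof (intro conjI ballI)
    show "Gm \<in> carrier (pow_mod W (n * k)) \<rightarrow> carrier (pow_mod (restr l T) n)"
    proof (rule funcsetI)
      fix y assume y: "y \<in> carrier (pow_mod W (n * k))"
      show "Gm y \<in> carrier (pow_mod (restr l T) n)"
        unfolding cT Gm_def using y yW by (auto intro!: T.sumk_closed tau_closed sjS)
    qed
    fix x y assume x: "x \<in> carrier (pow_mod W (n * k))" and y: "y \<in> carrier (pow_mod W (n * k))"
    show "Gm (x \<oplus>\<^bsub>pow_mod W (n * k)\<^esub> y) = Gm x \<oplus>\<^bsub>pow_mod (restr l T) n\<^esub> Gm y"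
    proof (rule ext)
      fix i
      show "Gm (x \<oplus>\<^bsub>pow_mod W (n * k)\<^esub> y) i = (Gm x \<oplus>\<^bsub>pow_mod (restr l T) n\<^esub> Gm y) i"
      proof (cases "i < n")
        case True
        have "sumk T (\<lambda>j. tau (sj j) (x (i * k + j) \<oplus>\<^bsub>W\<^esub> y (i * k + j))) k
            = sumk T (\<lambda>j. tau (sj j) (x (i * k + j)) \<oplus>\<^bsub>T\<^esub> tau (sj j) (y (i * k + j))) k"
          by (rule sumk_cong) (simp add: tau_add2 sjS yW x y True)
        also have "\<dots> = sumk T (\<lambda>j. tau (sj j) (x (i * k + j))) k \<oplus>\<^bsub>T\<^esub> sumk T (\<lambda>j. tau (sj j) (y (i * k + j))) k"
          by (rule T.sumk_add) (simp_all add: tau_closed sjS yW x y True)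
        finally show ?thesis unfolding aT aW Gm_def using True by simp
      next
        case False
        then show ?thesis unfolding aT aW Gm_def by simp
      qed
    qed
  next
    fix r y assume r: "r \<in> carrier R" and y: "y \<in> carrier (pow_mod W (n * k))"
    show "Gm (smult (pow_mod W (n * k)) r y) = smult (pow_mod (restr l T) n) r (Gm y)"
    proof (rule ext)
      fix i
      show "Gm (smult (pow_mod W (n * k)) r y) i = smult (pow_mod (restr l T) n) r (Gm y) i"
      proof (cases "i < n")
        case True
        have "sumk T (\<lambda>j. tau (sj j) (smult W r (y (i * k + j)))) k
            = sumk T (\<lambda>j. smult T (l r) (tau (sj j) (y (i * k + j)))) k"
          by (rule sumk_cong) (simp add: tau_l[symmetric] sj_comm tau_smult sjS yW y True r lc)
        also have "\<dots> = smult T (l r) (sumk T (\<lambda>j. tau (sj j) (y (i * k + j))) k)"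
          by (rule T.sumk_smult[symmetric]) (simp_all add: tau_closed sjS yW y True r lc)
        finally show ?thesis unfolding sT sW Gm_def using True by simp
      next
        case False
        then show ?thesis unfolding sT sW Gm_def using r lc by (simp add: T.smult_zero_right)
      qed
    qed
  qed
  have GF: "Gm (Fm x) = x" if x: "x \<in> carrier (pow_mod (restr l T) n)" for x
  proof (rule ext)
    fix i
    show "Gm (Fm x) i = x i"
    proof (cases "i < n")
      case True
      have "sumk T (\<lambda>j. tau (sj j) (Fm x (i * k + j))) k = sumk T (\<lambda>j. tau (sj j) (Phi j (x i))) k"
        by (rule sumk_cong) (simp add: Fm_def idx1 idx2 True)
      also have "\<dots> = x i" using KEY x True by (simp add: cT)
      finally show ?thesis unfolding Gm_def using True by simp
    next
      case False
      then show ?thesis using x by (simp add: Gm_def cT)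
    qed
  qed
  show ?thesis unfolding retr_def using Fl Gl GF by blast
qed

end


theorem lemma4p2:
  fixes R :: "'r ring" and S :: "'s ring" and l :: "'r \<Rightarrow> 's"
    and W :: "('r, 'w) module" and M :: "('s, 'm) module"
  assumes "ring R" and "ring S" and "l \<in> ring_hom R S"
    and "noetherian2 R" and "noetherian2 S"
    and "frobenius_ext R S l"
    and "centrally_projective R S l"
    and "lmodule R W" and "fin_gen R W"
    and "lmodule S M" and "in_add S (tensor R S l W) M"
  shows "in_add R W (restr l M)"
proof -
  interpret tens R W S l
    using assms(2,3,8) by (intro tens.intro tens_axioms.intro) auto
  have lc': "\<And>r. r \<in> carrier R \<Longrightarrow> l r \<in> carrier S" by (rule lc)
  obtain n h p where r1: "retr S M (pow_mod (tensor R S l W) n) h p"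
    using in_add_retr[OF T_lmodule assms(10) assms(11)] by blast
  have r2: "retr R (restr l M) (pow_mod (restr l (tensor R S l W)) n) h p"
    using retr_restr[OF lc' r1] by (simp add: restr_pow)
  obtain k phi sj where d:
    "\<And>j s. j < k \<Longrightarrow> s \<in> carrier S \<Longrightarrow> phi j s \<in> carrier R"
    "\<And>j s s'. j < k \<Longrightarrow> s \<in> carrier S \<Longrightarrow> s' \<in> carrier S \<Longrightarrow> phi j (s \<oplus>\<^bsub>S\<^esub> s') = phi j s \<oplus>\<^bsub>R\<^esub> phi j s'"
    "\<And>j r s. j < k \<Longrightarrow> r \<in> carrier R \<Longrightarrow> s \<in> carrier S \<Longrightarrow> phi j (l r \<otimes>\<^bsub>S\<^esub> s) = r \<otimes>\<^bsub>R\<^esub> phi j s"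
    "\<And>j r s. j < k \<Longrightarrow> r \<in> carrier R \<Longrightarrow> s \<in> carrier S \<Longrightarrow> phi j (s \<otimes>\<^bsub>S\<^esub> l r) = phi j s \<otimes>\<^bsub>R\<^esub> r"
    "\<And>j. j < k \<Longrightarrow> sj j \<in> carrier S"
    "\<And>j r. j < k \<Longrightarrow> r \<in> carrier R \<Longrightarrow> sj j \<otimes>\<^bsub>S\<^esub> l r = l r \<otimes>\<^bsub>S\<^esub> sj j"
    "\<And>s. s \<in> carrier S \<Longrightarrow> s = sumk S (\<lambda>j. sj j \<otimes>\<^bsub>S\<^esub> l (phi j s)) k"
    using cp_data[OF assms(1,2,3,7)] by blast
  obtain F G where r3: "retr R (pow_mod (restr l (tensor R S l W)) n) (pow_mod W (n * k)) F G"
    using tensor_retr[OF d] by blast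
  have "retr R (restr l M) (pow_mod W (n * k)) (F \<circ> h) (p \<circ> G)"
    by (rule retr_comp[OF r2 r3])
  then show ?thesis by (rule retr_in_add[OF assms(8) lmodule_restr[OF assms(1,3,10)]])
qed

end
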